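(* Consider a state-dependent discrete memoryless channel $W_{Y,Z|X,S}$ with finite alphabets, i.i.d. state distribution $Q_S$, innocent symbol $x_0$, and strictly causal channel state information available only at the transmitter (encoder $X_i=f_i(M,S^{i-1})$, decoder $Y^n\mapsto\hat M$). Let $\mathcal D$ be the set of joint pmfs $P_{S,X,Y,Z}=Q_SP_XW_{Y,Z|X,S}$ such that $P_Z=Q_0$ and $\mathbb I(X;Y)>\mathbb I(X;Z)$. Let $\mathcal S=\{R\ge0:\exists P\in\mathcal D\text{ with }R\le\mathbb I(X;Y)\}$. Then the covert capacity satisfies $C_{\mathrm{SC\text{-}T}}\ge\max\{x:x\in\mathcal S\}$.
   Context: Finite alphabets $\mathcal S,\mathcal X,\mathcal Y,\mathcal Z$. The channel has transition pmf $W_{Y,Z|X,S}$: input $X$, state $S$, output $Y$ at the legitimate receiver and output $Z$ at an adversary (warden). The state sequence $S^n$ is i.i.d. with pmf $Q_S$ and independent of the message; neither the legitimate receiver nor the warden knows the state. $x_0\in\mathcal X$ is a fixed innocent symbol, and $Q_0(z)=\sum_{s}Q_S(s)W_{Z|X,S}(z|x_0,s)$, assumed to have full support on $\mathcal Z$. A $(2^{nR},n)$ code consists of a message $M$ uniform on $\{1,\dots,2^{nR}\}$, an encoder and a decoder of the type specified. $P_{Z^n}$ denotes the distribution of the warden's output induced by the code. A rate $R$ is achievable if there is a sequence of $(2^{nR},n)$ codes with $\mathbb P(\hat M\ne M)\to 0$ and $\mathbb D(P_{Z^n}\|Q_0^{\otimes n})\to 0$ as $n\to\infty$; the covert capacity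 is the supremum of achievable rates. Mutual informations are computed under the indicated joint pmf. *)

theory Defs
  imports Complex_Main "HOL-Library.Extended_Real"
begin

text \<open>Finite alphabets are finite types 's, 'x, 'y, 'z.
  Channel: W x s y z = W_{Y,Z|X,S}(y,z|x,s).  Q = Q_S.
  Length-n sequences are lists of length n.\<close>

definition seqs :: "nat \<Rightarrow> 'a list set" where
  "seqs n = {xs. length xs = n}"

definition innocent_dist ::
  "('s::finite \<Rightarrow> real) \<Rightarrow> ('x \<Rightarrow> 's \<Rightarrow> 'y::finite \<Rightarrow> 'z \<Rightarrow> real) \<Rightarrow> 'x \<Rightarrow> 'z \<Rightarrow> real" where
  "innocent_dist Q W x0 z = (\<Sum>s\<in>UNIV. \<Sum>y\<in>UNIV. Q s * W x0 s y z)"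

definition num_msgs :: "real \<Rightarrow> nat \<Rightarrow> nat" where
  "num_msgs R n = nat \<lceil>2 powr (real n * R)\<rceil>"

text \<open>Joint pmf of (M, S^n, Y^n, Z^n) induced by a code with strictly causal
  state information at the transmitter: X_i = enc i m (S_0 ... S_{i-1}) (0-indexed),
  message M uniform on {0..<N}.\<close>
definition code_joint ::
  "('s \<Rightarrow> real) \<Rightarrow> ('x \<Rightarrow> 's \<Rightarrow> 'y \<Rightarrow> 'z \<Rightarrow> real) \<Rightarrow> nat \<Rightarrow> nat
   \<Rightarrow> (nat \<Rightarrow> nat \<Rightarrow> 's list \<Rightarrow> 'x) \<Rightarrow> nat \<Rightarrow> 's list \<Rightarrow> 'y list \<Rightarrow> 'z list \<Rightarrow> real" where
  "code_joint Q W N n enc m ss ys zs =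
     (1 / real N) * (\<Prod>i<n. Q (ss ! i) * W (enc i m (take i ss)) (ss ! i) (ys ! i) (zs ! i))"

definition code_error ::
  "('s::finite \<Rightarrow> real) \<Rightarrow> ('x \<Rightarrow> 's \<Rightarrow> 'y::finite \<Rightarrow> 'z::finite \<Rightarrow> real) \<Rightarrow> nat \<Rightarrow> nat
   \<Rightarrow> (nat \<Rightarrow> nat \<Rightarrow> 's list \<Rightarrow> 'x) \<Rightarrow> ('y list \<Rightarrow> nat) \<Rightarrow> real" where
  "code_error Q W N n enc dec =
     (\<Sum>m<N. \<Sum>ss\<in>seqs n. \<Sum>ys\<in>seqs n. \<Sum>zs\<in>seqs n.
        if dec ys \<noteq> m then code_joint Q W N n enc m ss ys zs else 0)"

definition code_PZ ::
  "('s::finite \<Rightarrow> real) \<Rightarrow> ('x \<Rightarrow> 's \<Rightarrow> 'y::finite \<Rightarrow> 'z \<Rightarrow> real) \<Rightarrow> nat \<Rightarrow> nat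
   \<Rightarrow> (nat \<Rightarrow> nat \<Rightarrow> 's list \<Rightarrow> 'x) \<Rightarrow> 'z list \<Rightarrow> real" where
  "code_PZ Q W N n enc zs =
     (\<Sum>m<N. \<Sum>ss\<in>seqs n. \<Sum>ys\<in>seqs n. code_joint Q W N n enc m ss ys zs)"

definition kl_div :: "'a set \<Rightarrow> ('a \<Rightarrow> real) \<Rightarrow> ('a \<Rightarrow> real) \<Rightarrow> real" where
  "kl_div A P Qd = (\<Sum>a\<in>A. if P a = 0 then 0 else P a * ln (P a / Qd a))"

definition code_covertness ::
  "('s::finite \<Rightarrow> real) \<Rightarrow> ('x \<Rightarrow> 's \<Rightarrow> 'y::finite \<Rightarrow> 'z::finite \<Rightarrow> real) \<Rightarrow> 'x \<Rightarrow> nat \<Rightarrow> nat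
   \<Rightarrow> (nat \<Rightarrow> nat \<Rightarrow> 's list \<Rightarrow> 'x) \<Rightarrow> real" where
  "code_covertness Q W x0 N n enc =
     kl_div (seqs n) (code_PZ Q W N n enc)
       (\<lambda>zs. \<Prod>i<n. innocent_dist Q W x0 (zs ! i))"

definition covert_achievable_SCT ::
  "('s::finite \<Rightarrow> real) \<Rightarrow> ('x \<Rightarrow> 's \<Rightarrow> 'y::finite \<Rightarrow> 'z::finite \<Rightarrow> real) \<Rightarrow> 'x \<Rightarrow> real \<Rightarrow> bool" where
  "covert_achievable_SCT Q W x0 R \<longleftrightarrow>
     (\<exists>(enc :: nat \<Rightarrow> nat \<Rightarrow> nat \<Rightarrow> 's list \<Rightarrow> 'x) (dec :: nat \<Rightarrow> 'y list \<Rightarrow> nat).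
        (\<lambda>n. code_error Q W (num_msgs R n) n (enc n) (dec n)) \<longlonglongrightarrow> 0 \<and>
        (\<lambda>n. code_covertness Q W x0 (num_msgs R n) n (enc n)) \<longlonglongrightarrow> 0)"

definition covert_capacity_SCT ::
  "('s::finite \<Rightarrow> real) \<Rightarrow> ('x \<Rightarrow> 's \<Rightarrow> 'y::finite \<Rightarrow> 'z::finite \<Rightarrow> real) \<Rightarrow> 'x \<Rightarrow> ereal" where
  "covert_capacity_SCT Q W x0 = Sup (ereal ` {R. covert_achievable_SCT Q W x0 R})"

definition mutual_info :: "('a::finite \<Rightarrow> 'b::finite \<Rightarrow> real) \<Rightarrow> real" where
  "mutual_info p = (\<Sum>a\<in>UNIV. \<Sum>b\<in>UNIV.
     if p a b = 0 then 0
     else p a b * log 2 (p a b / ((\<Sum>b'\<in>UNIV. p a b') * (\<Sum>a'\<in>UNIV. p a' b))))"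

definition joint_XY :: "('s::finite \<Rightarrow> real) \<Rightarrow> ('x \<Rightarrow> 's \<Rightarrow> 'y \<Rightarrow> 'z::finite \<Rightarrow> real) \<Rightarrow> ('x \<Rightarrow> real) \<Rightarrow> 'x \<Rightarrow> 'y \<Rightarrow> real" where
  "joint_XY Q W PX x y = (\<Sum>s\<in>UNIV. \<Sum>z\<in>UNIV. Q s * PX x * W x s y z)"

definition joint_XZ :: "('s::finite \<Rightarrow> real) \<Rightarrow> ('x \<Rightarrow> 's \<Rightarrow> 'y::finite \<Rightarrow> 'z \<Rightarrow> real) \<Rightarrow> ('x \<Rightarrow> real) \<Rightarrow> 'x \<Rightarrow> 'z \<Rightarrow> real" where
  "joint_XZ Q W PX x z = (\<Sum>s\<in>UNIV. \<Sum>y\<in>UNIV. Q s * PX x * W x s y z)"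

definition marg_Z :: "('s::finite \<Rightarrow> real) \<Rightarrow> ('x::finite \<Rightarrow> 's \<Rightarrow> 'y::finite \<Rightarrow> 'z \<Rightarrow> real) \<Rightarrow> ('x \<Rightarrow> real) \<Rightarrow> 'z \<Rightarrow> real" where
  "marg_Z Q W PX z = (\<Sum>x\<in>UNIV. joint_XZ Q W PX x z)"

definition is_pmf :: "('a::finite \<Rightarrow> real) \<Rightarrow> bool" where
  "is_pmf p \<longleftrightarrow> (\<forall>a. 0 \<le> p a) \<and> (\<Sum>a\<in>UNIV. p a) = 1"

text \<open>The set \<D>, represented by the input pmf P_X (the joint is Q_S P_X W).\<close>
definition set_D :: "('s::finite \<Rightarrow> real) \<Rightarrow> ('x::finite \<Rightarrow> 's \<Rightarrow> 'y::finite \<Rightarrow> 'z::finite \<Rightarrow> real) \<Rightarrow> 'x \<Rightarrow> ('x \<Rightarrow> real) set" where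
  "set_D Q W x0 = {PX. is_pmf PX \<and> marg_Z Q W PX = innocent_dist Q W x0 \<and>
      mutual_info (joint_XY Q W PX) > mutual_info (joint_XZ Q W PX)}"

definition set_S :: "('s::finite \<Rightarrow> real) \<Rightarrow> ('x::finite \<Rightarrow> 's \<Rightarrow> 'y::finite \<Rightarrow> 'z::finite \<Rightarrow> real) \<Rightarrow> 'x \<Rightarrow> real set" where
  "set_S Q W x0 = {R. 0 \<le> R \<and> (\<exists>PX\<in>set_D Q W x0. R \<le> mutual_info (joint_XY Q W PX))}"

end

theory Submission
  imports Defs
begin

definition lenset :: "'a set \<Rightarrow> nat \<Rightarrow> 'a list set" where
  "lenset A n = {xs. set xs \<subseteq> A \<and> length xs = n}"

lemma finite_lenset: "finite A \<Longrightarrow> finite (lenset A n)"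
  by (simp add: lenset_def finite_lists_length_eq)

lemma lenset_Suc: "lenset A (Suc n) = (\<lambda>(a,xs). a#xs) ` (A \<times> lenset A n)"
  by (auto simp: lenset_def length_Suc_conv image_iff)

lemma sum_prod_lenset:
  fixes f :: "nat \<Rightarrow> 'a \<Rightarrow> real"
  assumes "finite A"
  shows "(\<Sum>xs\<in>lenset A n. \<Prod>i<n. f i (xs!i)) = (\<Prod>i<n. \<Sum>a\<in>A. f i a)"
  using assms
proof (induction n arbitrary: f)
  case 0
  have "lenset A 0 = {[]}" by (auto simp: lenset_def)
  then show ?case by simp
next
  case (Suc n)
  have inj: "inj_on (\<lambda>(a,xs). a#xs) (A \<times> lenset A n)" by (auto simp: inj_on_def)
  have "(\<Sum>xs\<in>lenset A (Suc n). \<Prod>i<Suc n. f i (xs!i))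
      = (\<Sum>(a,xs)\<in>A \<times> lenset A n. \<Prod>i<Suc n. f i ((a#xs)!i))"
    unfolding lenset_Suc by (subst sum.reindex[OF inj]) (simp add: case_prod_unfold)
  also have "\<dots> = (\<Sum>(a,xs)\<in>A \<times> lenset A n. f 0 a * (\<Prod>i<n. f (Suc i) (xs!i)))"
    by (subst prod.lessThan_Suc_shift) simp
  also have "\<dots> = (\<Sum>a\<in>A. \<Sum>xs\<in>lenset A n. f 0 a * (\<Prod>i<n. f (Suc i) (xs!i)))"
    by (simp add: sum.cartesian_product)
  also have "\<dots> = (\<Sum>a\<in>A. f 0 a * (\<Prod>i<n. \<Sum>a\<in>A. f (Suc i) a))"
  proof (rule sum.cong[OF refl])
    fix a
    have "(\<Sum>xs\<in>lenset A n. f 0 a * (\<Prod>i<n. f (Suc i) (xs!i))) = f 0 a * (\<Sum>xs\<in>lenset A n. (\<Prod>i<n. f (Suc i) (xs!i)))"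
      by (rule sum_distrib_left[symmetric])
    also have "\<dots> = f 0 a * (\<Prod>i<n. \<Sum>a\<in>A. f (Suc i) a)"
      using Suc.IH[OF Suc.prems, of "\<lambda>i. f (Suc i)"] by simp
    finally show "(\<Sum>xs\<in>lenset A n. f 0 a * (\<Prod>i<n. f (Suc i) (xs!i))) = f 0 a * (\<Prod>i<n. \<Sum>a\<in>A. f (Suc i) a)" .
  qed
  also have "\<dots> = (\<Prod>i<Suc n. \<Sum>a\<in>A. f i a)"
    by (subst prod.lessThan_Suc_shift) (simp add: sum_distrib_right)
  finally show ?case .
qed

lemma seqs_lenset: "seqs n = lenset (UNIV::'a::finite set) n"
  by (simp add: seqs_def lenset_def)

lemma finite_seqs[simp]: "finite (seqs n :: 'a::finite list set)"
  by (simp add: seqs_lenset finite_lenset)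

lemma sum_prod_seqs:
  fixes f :: "nat \<Rightarrow> 'a::finite \<Rightarrow> real"
  shows   "(\<Sum>xs\<in>seqs n. \<Prod>i<n. f i (xs!i)) = (\<Prod>i<n. \<Sum>a\<in>(UNIV::'a::finite set). f i a)"
  by (simp add: seqs_lenset sum_prod_lenset)

lemma sum_prod_seqs2:
  fixes f :: "nat \<Rightarrow> 'a::finite \<Rightarrow> 'b::finite \<Rightarrow> real"
  shows   "(\<Sum>xs\<in>seqs n. \<Sum>ys\<in>seqs n. \<Prod>i<n. f i (xs!i) (ys!i))
   = (\<Prod>i<n. \<Sum>a\<in>(UNIV::'a::finite set). \<Sum>b\<in>(UNIV::'b::finite set). f i a b)"
proof -
  have "(\<Sum>xs\<in>seqs n. \<Sum>ys\<in>seqs n. \<Prod>i<n. f i (xs!i) (ys!i))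
      = (\<Sum>xs\<in>seqs n. \<Prod>i<n. \<Sum>b\<in>(UNIV::'b set). f i (xs!i) b)"
    by (rule sum.cong[OF refl]) (rule sum_prod_seqs)
  also have "\<dots> = (\<Prod>i<n. \<Sum>a\<in>(UNIV::'a set). \<Sum>b\<in>(UNIV::'b set). f i a b)"
    by (rule sum_prod_seqs)
  finally show ?thesis .
qed

lemma sum_codebook:
  fixes P :: "'x::finite list \<Rightarrow> real"
  shows "(\<Sum>cs\<in>lenset (seqs n) N. (\<Prod>m<N. P (cs!m)) * (\<Prod>m<N. h m (cs!m)))
       = (\<Prod>m<N. \<Sum>a\<in>seqs n. P a * h m a)"
proof -
  have "(\<Sum>cs\<in>lenset (seqs n) N. (\<Prod>m<N. P (cs!m)) * (\<Prod>m<N. h m (cs!m)))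
      = (\<Sum>cs\<in>lenset (seqs n) N. \<Prod>m<N. P (cs!m) * h m (cs!m))"
    by (simp add: prod.distrib)
  also have "\<dots> = (\<Prod>m<N. \<Sum>a\<in>seqs n. P a * h m a)"
    by (rule sum_prod_lenset) simp
  finally show ?thesis .
qed

lemma sum_codebook1:
  fixes P :: "'x::finite list \<Rightarrow> real"
  assumes "m < N" and P1: "(\<Sum>a\<in>seqs n. P a) = 1"
  shows "(\<Sum>cs\<in>lenset (seqs n) N. (\<Prod>m<N. P (cs!m)) * g (cs!m))
       = (\<Sum>a\<in>seqs n. P a * g a)"
proof -
  let ?h = "\<lambda>j a. if j = m then g a else 1"
  have e: "\<And>cs. (\<Prod>j<N. ?h j (cs!j)) = g (cs!m)" using assms(1) by simp
  have "(\<Sum>cs\<in>lenset (seqs n) N. (\<Prod>m<N. P (cs!m)) * g (cs!m))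
      = (\<Sum>cs\<in>lenset (seqs n) N. (\<Prod>m<N. P (cs!m)) * (\<Prod>j<N. ?h j (cs!j)))"
    by (simp only: e)
  also have "\<dots> = (\<Prod>j<N. \<Sum>a\<in>seqs n. P a * ?h j a)"
    by (rule sum_codebook)
  also have "\<dots> = (\<Prod>j<N. if j = m then (\<Sum>a\<in>seqs n. P a * g a) else 1)"
    by (rule prod.cong) (auto simp: P1)
  also have "\<dots> = (\<Sum>a\<in>seqs n. P a * g a)"
    using assms(1) by simp
  finally show ?thesis .
qed

lemma sum_codebook0:
  fixes P :: "'x::finite list \<Rightarrow> real"
  assumes P1: "(\<Sum>a\<in>seqs n. P a) = 1"
  shows "(\<Sum>cs\<in>lenset (seqs n) N. (\<Prod>m<N. P (cs!m))) = 1"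
  using sum_codebook[where P=P and h="\<lambda>_ _. 1" and n=n and N=N] by (simp add: P1)

lemma sum_codebook2:
  fixes P :: "'x::finite list \<Rightarrow> real"
  assumes "m < N" "m' < N" "m \<noteq> m'" and P1: "(\<Sum>a\<in>seqs n. P a) = 1"
  shows "(\<Sum>cs\<in>lenset (seqs n) N. (\<Prod>m<N. P (cs!m)) * (g (cs!m) * g' (cs!m')))
       = (\<Sum>a\<in>seqs n. P a * g a) * (\<Sum>a\<in>seqs n. P a * g' a)"
proof -
  let ?h = "\<lambda>j a. if j = m then g a else if j = m' then g' a else 1"
  have e: "\<And>cs. (\<Prod>j<N. ?h j (cs!j)) = g (cs!m) * g' (cs!m')"
  proof -
    fix cs
    have "(\<Prod>j<N. ?h j (cs!j)) = (\<Prod>j<N. (if j = m then g (cs!j) else 1) * (if j = m' then g' (cs!j) else 1))"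
      using assms(3) by (intro prod.cong) auto
    also have "\<dots> = g (cs!m) * g' (cs!m')"
      using assms(1,2) by (simp add: prod.distrib)
    finally show "(\<Prod>j<N. ?h j (cs!j)) = g (cs!m) * g' (cs!m')" .
  qed
  have "(\<Sum>cs\<in>lenset (seqs n) N. (\<Prod>m<N. P (cs!m)) * (g (cs!m) * g' (cs!m')))
      = (\<Sum>cs\<in>lenset (seqs n) N. (\<Prod>m<N. P (cs!m)) * (\<Prod>j<N. ?h j (cs!j)))"
    by (simp add: e)
  also have "\<dots> = (\<Prod>j<N. \<Sum>a\<in>seqs n. P a * ?h j a)"
    by (rule sum_codebook)
  also have "\<dots> = (\<Prod>j<N. (if j = m then (\<Sum>a\<in>seqs n. P a * g a) else 1) *
                      (if j = m' then (\<Sum>a\<in>seqs n. P a * g' a) else 1))"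
    using assms(3) by (intro prod.cong) (auto simp: P1)
  also have "\<dots> = (\<Sum>a\<in>seqs n. P a * g a) * (\<Sum>a\<in>seqs n. P a * g' a)"
    using assms(1,2) by (simp add: prod.distrib)
  finally show ?thesis .
qed


lemma jensen_ln:
  fixes w x :: "'a \<Rightarrow> real"
  assumes "finite S" "\<And>s. s \<in> S \<Longrightarrow> 0 \<le> w s"
    and "\<And>s. s \<in> S \<Longrightarrow> 0 < w s \<Longrightarrow> 0 < x s"
    and "0 < sum w S"
  shows "(\<Sum>s\<in>S. w s * ln (x s)) \<le> sum w S * ln ((\<Sum>s\<in>S. w s * x s) / sum w S)"
proof -
  define W where "W = sum w S"
  define M where "M = (\<Sum>s\<in>S. w s * x s) / W"
  have wx: "\<And>s. s \<in> S \<Longrightarrow> 0 \<le> w s * x s"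
    using assms(2,3) by (metis less_eq_real_def mult_nonneg_nonneg mult_zero_left)
  obtain s0 where s0: "s0 \<in> S" "0 < w s0"
    using assms(4) by (metis assms(2) less_eq_real_def sum_nonpos not_le)
  have "0 < w s0 * x s0" using s0 assms(3) by simp
  moreover have "w s0 * x s0 \<le> (\<Sum>s\<in>S. w s * x s)"
    using s0 wx assms(1) by (intro member_le_sum) auto
  ultimately have M: "0 < M" unfolding M_def W_def using assms(4) by simp
  have "\<And>s. s \<in> S \<Longrightarrow> w s * (ln (x s) - ln M) \<le> w s * (x s / M - 1)"
  proof -
    fix s assume s: "s \<in> S"
    show "w s * (ln (x s) - ln M) \<le> w s * (x s / M - 1)"
    proof (cases "w s = 0")
      case False
      then have "0 < w s" "0 < x s" using assms(2,3) s by (auto simp: less_le)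
      then have "ln (x s / M) \<le> x s / M - 1" using M by (intro ln_le_minus_one) simp
      then have "ln (x s) - ln M \<le> x s / M - 1" using \<open>0 < x s\<close> M by (simp add: ln_div)
      then show ?thesis using \<open>0 < w s\<close> by (intro mult_left_mono) auto
    qed simp
  qed
  then have "(\<Sum>s\<in>S. w s * (ln (x s) - ln M)) \<le> (\<Sum>s\<in>S. w s * (x s / M - 1))"
    by (rule sum_mono)
  also have "\<dots> = (\<Sum>s\<in>S. w s * x s) / M - W"
    by (simp add: algebra_simps sum_subtractf sum_divide_distrib W_def)
  also have "\<dots> = 0" using M unfolding M_def W_def using assms(4) by (auto simp: field_simps)
  finally have "(\<Sum>s\<in>S. w s * ln (x s)) - W * ln M \<le> 0"
    by (simp add: algebra_simps sum_subtractf sum_distrib_left W_def)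
  then show ?thesis unfolding W_def M_def by simp
qed

lemma one_plus_powr_le:
  fixes x \<rho> :: real
  assumes "0 < x" "0 < \<rho>" "\<rho> \<le> 1"
  shows "(1 + x) powr \<rho> \<le> 1 + x powr \<rho>"
proof -
  define u where "u = 1 / (1 + x)"
  define v where "v = x / (1 + x)"
  have uv: "u + v = 1" using assms(1) by (simp add: u_def v_def field_simps)
  have "u \<le> u powr \<rho>"
    using powr_mono'[of \<rho> 1 u] assms uv by (simp add: u_def v_def)
  moreover have "v \<le> v powr \<rho>"
    using powr_mono'[of \<rho> 1 v] assms uv by (simp add: u_def v_def)
  ultimately have "1 \<le> u powr \<rho> + v powr \<rho>" using uv by simp
  also have "u powr \<rho> + v powr \<rho> = (1 + x powr \<rho>) / (1 + x) powr \<rho>"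
    using assms(1) by (simp add: u_def v_def powr_divide add_divide_distrib)
  finally show ?thesis using assms(1) by (simp add: field_simps)
qed

lemma ln_one_plus_le:
  fixes x \<rho> :: real
  assumes "0 < x" "0 < \<rho>" "\<rho> \<le> 1"
  shows "ln (1 + x) \<le> exp (\<rho> * ln x) / \<rho>"
proof -
  have "\<rho> * ln (1 + x) = ln ((1 + x) powr \<rho>)" using assms by (simp add: ln_powr)
  also have "\<dots> \<le> (1 + x) powr \<rho> - 1" using assms by (intro ln_le_minus_one) simp
  also have "\<dots> \<le> x powr \<rho>" using one_plus_powr_le[OF assms] by simp
  also have "\<dots> = exp (\<rho> * ln x)" using assms by (simp add: powr_def mult.commute)
  finally show ?thesis using assms by (simp add: field_simps)
qed

lemma exists_rho:
  fixes c d :: "'a \<Rightarrow> real"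
  assumes "finite S" "(\<Sum>k\<in>S. c k) = 1" "b + (\<Sum>k\<in>S. c k * d k) < 0"
  shows "\<exists>\<rho>>0. \<rho> < 1 \<and> exp (\<rho> * b) * (\<Sum>k\<in>S. c k * exp (\<rho> * d k)) < 1"
proof -
  define f where "f = (\<lambda>\<rho>. exp (\<rho> * b) * (\<Sum>k\<in>S. c k * exp (\<rho> * d k)))"
  have D: "(f has_real_derivative (b + (\<Sum>k\<in>S. c k * d k))) (at 0)"
    unfolding f_def
    by (auto intro!: derivative_eq_intros simp: assms(2)) (intro sum.cong refl mult.commute)
  from DERIV_neg_dec_right[OF D assms(3)] obtain dd where
    dd: "dd > 0" "\<And>h. h > 0 \<Longrightarrow> h < dd \<Longrightarrow> f (0 + h) < f 0" by blast
  have f0: "f 0 = 1" using assms(2) by (simp add: f_def)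
  define h where "h = min (dd/2) (1/2)"
  have "h > 0" "h < dd" "h < 1" using dd by (auto simp: h_def)
  then show ?thesis using dd(2)[of h] f0 unfolding f_def by auto
qed

lemma exists_le_expectation:
  fixes \<pi> g :: "'a \<Rightarrow> real"
  assumes "finite S" "\<And>s. s \<in> S \<Longrightarrow> 0 \<le> \<pi> s" "sum \<pi> S = 1"
  shows "\<exists>s\<in>S. g s \<le> (\<Sum>s\<in>S. \<pi> s * g s)"
proof (rule ccontr)
  assume "\<not> ?thesis"
  then have lt: "\<And>s. s \<in> S \<Longrightarrow> (\<Sum>s\<in>S. \<pi> s * g s) < g s" by auto
  obtain s0 where s0: "s0 \<in> S" "0 < \<pi> s0"
    using assms by (metis less_eq_real_def sum_nonpos not_le zero_less_one)
  have "(\<Sum>s\<in>S. \<pi> s * (\<Sum>s\<in>S. \<pi> s * g s)) < (\<Sum>s\<in>S. \<pi> s * g s)"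
    using assms(1) s0 lt assms(2)
    by (intro sum_strict_mono_ex1) (auto intro: mult_left_mono mult_strict_left_mono less_imp_le)
  then show False using assms(3) by (simp add: sum_distrib_right[symmetric])
qed

lemma kl_nonneg:
  fixes P Q :: "'a \<Rightarrow> real"
  assumes "finite A" "\<And>a. a \<in> A \<Longrightarrow> 0 \<le> P a" "\<And>a. a \<in> A \<Longrightarrow> 0 < Q a"
    "sum P A = 1" "sum Q A = 1"
  shows "0 \<le> kl_div A P Q"
proof -
  have "\<And>a. a \<in> A \<Longrightarrow> P a - Q a \<le> (if P a = 0 then 0 else P a * ln (P a / Q a))"
  proof -
    fix a assume a: "a \<in> A"
    show "P a - Q a \<le> (if P a = 0 then 0 else P a * ln (P a / Q a))"
    proof (cases "P a = 0")
      case False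
      then have p: "0 < P a" using assms(2)[OF a] by simp
      have q: "0 < Q a" using assms(3)[OF a] .
      have "ln (Q a / P a) \<le> Q a / P a - 1" using p q by (intro ln_le_minus_one) simp
      then have "1 - Q a / P a \<le> ln (P a / Q a)" using p q by (simp add: ln_div)
      then have "P a * (1 - Q a / P a) \<le> P a * ln (P a / Q a)" using p by (intro mult_left_mono) auto
      then show ?thesis using False p by (simp add: algebra_simps)
    qed (use assms(3)[OF a] in simp)
  qed
  then have "(\<Sum>a\<in>A. P a - Q a) \<le> kl_div A P Q" unfolding kl_div_def by (rule sum_mono)
  then show ?thesis using assms(4,5) by (simp add: sum_subtractf)
qed


definition VY :: "('s::finite \<Rightarrow> real) \<Rightarrow> ('x \<Rightarrow> 's \<Rightarrow> 'y \<Rightarrow> 'z::finite \<Rightarrow> real) \<Rightarrow> 'x \<Rightarrow> 'y \<Rightarrow> real" where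
  "VY Q W x y = (\<Sum>s\<in>UNIV. \<Sum>z\<in>UNIV. Q s * W x s y z)"
definition VZ :: "('s::finite \<Rightarrow> real) \<Rightarrow> ('x \<Rightarrow> 's \<Rightarrow> 'y::finite \<Rightarrow> 'z \<Rightarrow> real) \<Rightarrow> 'x \<Rightarrow> 'z \<Rightarrow> real" where
  "VZ Q W x z = (\<Sum>s\<in>UNIV. \<Sum>y\<in>UNIV. Q s * W x s y z)"

definition enc_of :: "'x list list \<Rightarrow> nat \<Rightarrow> nat \<Rightarrow> 's list \<Rightarrow> 'x" where
  "enc_of cs i m ss = cs ! m ! i"

lemma sum2_QW_Z:
  "(\<Sum>ss\<in>seqs n. \<Sum>ys\<in>seqs n. \<Prod>i<n. Q (ss!i) * W (c!i) (ss!i) (ys!i) (zs!i))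
   = (\<Prod>i<n. VZ Q W (c!i) (zs!i))"
  using sum_prod_seqs2[where f="\<lambda>i s y. Q s * W (c!i) s y (zs!i)" and n=n] by (simp add: VZ_def)

lemma sum2_QW_Y:
  "(\<Sum>ss\<in>seqs n. \<Sum>zs\<in>seqs n. \<Prod>i<n. Q (ss!i) * W (c!i) (ss!i) (ys!i) (zs!i))
   = (\<Prod>i<n. VY Q W (c!i) (ys!i))"
  using sum_prod_seqs2[where f="\<lambda>i s z. Q s * W (c!i) s (ys!i) z" and n=n] by (simp add: VY_def)

lemma code_PZ_eq:
  "code_PZ Q W N n (enc_of cs) zs = (1 / real N) * (\<Sum>m<N. \<Prod>i<n. VZ Q W (cs!m!i) (zs!i))"
proof -
  have "code_PZ Q W N n (enc_of cs) zs =
     (\<Sum>m<N. (1 / real N) * (\<Sum>ss\<in>seqs n. \<Sum>ys\<in>seqs n. \<Prod>i<n. Q (ss ! i) * W (cs!m!i) (ss ! i) (ys ! i) (zs ! i)))"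
    unfolding code_PZ_def code_joint_def enc_of_def by (simp add: sum_distrib_left)
  also have "\<dots> = (\<Sum>m<N. (1 / real N) * (\<Prod>i<n. VZ Q W (cs!m!i) (zs!i)))"
    by (simp only: sum2_QW_Z)
  finally show ?thesis by (simp add: sum_distrib_left)
qed

lemma code_error_eq:
  "code_error Q W N n (enc_of cs) dec =
   (1 / real N) * (\<Sum>m<N. \<Sum>ys\<in>seqs n. if dec ys \<noteq> m then \<Prod>i<n. VY Q W (cs!m!i) (ys!i) else 0)"
proof -
  have "code_error Q W N n (enc_of cs) dec =
     (\<Sum>m<N. \<Sum>ys\<in>seqs n. \<Sum>ss\<in>seqs n. \<Sum>zs\<in>seqs n.
        if dec ys \<noteq> m then code_joint Q W N n (enc_of cs) m ss ys zs else 0)"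
    unfolding code_error_def by (intro sum.cong refl sum.swap)
  also have "\<dots> = (\<Sum>m<N. \<Sum>ys\<in>seqs n. if dec ys \<noteq> m then
        (1 / real N) * (\<Sum>ss\<in>seqs n. \<Sum>zs\<in>seqs n. \<Prod>i<n. Q (ss ! i) * W (cs!m!i) (ss ! i) (ys ! i) (zs ! i)) else 0)"
    unfolding code_joint_def enc_of_def by (intro sum.cong refl) (auto simp: sum_distrib_left)
  also have "\<dots> = (\<Sum>m<N. \<Sum>ys\<in>seqs n. if dec ys \<noteq> m then
        (1 / real N) * (\<Prod>i<n. VY Q W (cs!m!i) (ys!i)) else 0)"
    by (simp only: sum2_QW_Y)
  finally show ?thesis by (simp add: sum_distrib_left if_distrib cong: if_cong)
qed


locale chan =
  fixes PX :: "'x::finite \<Rightarrow> real" and V :: "'x \<Rightarrow> 'y::finite \<Rightarrow> real"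
  assumes PX_nonneg: "\<And>x. 0 \<le> PX x" and PX_sum: "(\<Sum>x\<in>UNIV. PX x) = 1"
    and V_nonneg: "\<And>x y. 0 \<le> V x y" and V_sum: "\<And>x. (\<Sum>y\<in>UNIV. V x y) = 1"
begin

definition PY :: "'y \<Rightarrow> real" where "PY y = (\<Sum>x\<in>UNIV. PX x * V x y)"
definition PXn :: "nat \<Rightarrow> 'x list \<Rightarrow> real" where "PXn n a = (\<Prod>i<n. PX (a!i))"
definition Vn :: "nat \<Rightarrow> 'x list \<Rightarrow> 'y list \<Rightarrow> real" where "Vn n a y = (\<Prod>i<n. V (a!i) (y!i))"
definition PYn :: "nat \<Rightarrow> 'y list \<Rightarrow> real" where "PYn n y = (\<Prod>i<n. PY (y!i))"
definition pcb :: "nat \<Rightarrow> nat \<Rightarrow> 'x list list \<Rightarrow> real" where "pcb n N cs = (\<Prod>m<N. PXn n (cs!m))"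

lemma PY_nonneg: "0 \<le> PY y" unfolding PY_def by (intro sum_nonneg mult_nonneg_nonneg PX_nonneg V_nonneg)
lemma PXn_nonneg: "0 \<le> PXn n a" unfolding PXn_def by (intro prod_nonneg PX_nonneg)
lemma Vn_nonneg: "0 \<le> Vn n a y" unfolding Vn_def by (intro prod_nonneg V_nonneg)
lemma PYn_nonneg: "0 \<le> PYn n y" unfolding PYn_def by (intro prod_nonneg PY_nonneg)
lemma pcb_nonneg: "0 \<le> pcb n N cs" unfolding pcb_def by (intro prod_nonneg PXn_nonneg)

lemma sum_PXn: "(\<Sum>a\<in>seqs n. PXn n a) = 1"
  unfolding PXn_def using sum_prod_seqs[where f="\<lambda>i x. PX x" and n=n] by (simp add: PX_sum)

lemma sum_Vn: "(\<Sum>y\<in>seqs n. Vn n a y) = 1"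
  unfolding Vn_def using sum_prod_seqs[where f="\<lambda>i y. V (a!i) y" and n=n] by (simp add: V_sum)

lemma sum_PXn_Vn: "(\<Sum>a\<in>seqs n. PXn n a * Vn n a y) = PYn n y"
  unfolding PXn_def Vn_def PYn_def PY_def
  using sum_prod_seqs[where f="\<lambda>i x. PX x * V x (y!i)" and n=n] by (simp add: prod.distrib)

lemma sum_pcb: "(\<Sum>cs\<in>lenset (seqs n) N. pcb n N cs) = 1"
  unfolding pcb_def by (rule sum_codebook0[OF sum_PXn])

lemma sum_pcb1: "m < N \<Longrightarrow> (\<Sum>cs\<in>lenset (seqs n) N. pcb n N cs * g (cs!m)) = (\<Sum>a\<in>seqs n. PXn n a * g a)"
  unfolding pcb_def by (rule sum_codebook1[OF _ sum_PXn])

lemma sum_pcb2: "m < N \<Longrightarrow> m' < N \<Longrightarrow> m \<noteq> m' \<Longrightarrow>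
   (\<Sum>cs\<in>lenset (seqs n) N. pcb n N cs * (g (cs!m) * g' (cs!m'))) =
   (\<Sum>a\<in>seqs n. PXn n a * g a) * (\<Sum>a\<in>seqs n. PXn n a * g' a)"
  unfolding pcb_def by (rule sum_codebook2[OF _ _ _ sum_PXn])

lemma lenset_seqs_nth: "cs \<in> lenset (seqs n) N \<Longrightarrow> m < N \<Longrightarrow> cs ! m \<in> seqs n"
  by (auto simp: lenset_def)

lemma finite_cb: "finite (lenset (seqs n :: 'x list set) N)"
  by (simp add: finite_lenset)


definition okc :: "real \<Rightarrow> nat \<Rightarrow> 'x list list \<Rightarrow> nat \<Rightarrow> 'y list \<Rightarrow> bool" where
  "okc \<theta> n cs k ys \<longleftrightarrow> \<theta> * PYn n ys < Vn n (cs!k) ys"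

definition decd :: "real \<Rightarrow> nat \<Rightarrow> nat \<Rightarrow> 'x list list \<Rightarrow> 'y list \<Rightarrow> nat" where
  "decd \<theta> n N cs ys = (if \<exists>k<N. okc \<theta> n cs k ys then LEAST k. k < N \<and> okc \<theta> n cs k ys else N)"

definition errc :: "real \<Rightarrow> nat \<Rightarrow> nat \<Rightarrow> 'x list list \<Rightarrow> real" where
  "errc \<theta> n N cs = (1 / real N) * (\<Sum>m<N. \<Sum>ys\<in>seqs n. if decd \<theta> n N cs ys \<noteq> m then Vn n (cs!m) ys else 0)"

lemma err_pointwise:
  assumes "m < N"
  shows "(if decd \<theta> n N cs ys \<noteq> m then Vn n (cs!m) ys else 0)
    \<le> Vn n (cs!m) ys * of_bool (\<not> okc \<theta> n cs m ys) +
       (\<Sum>k\<in>{..<N}-{m}. Vn n (cs!m) ys * of_bool (okc \<theta> n cs k ys))"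
proof (cases "decd \<theta> n N cs ys = m")
  case True
  then show ?thesis by (simp add: Vn_nonneg sum_nonneg)
next
  case ne: False
  show ?thesis
  proof (cases "okc \<theta> n cs m ys")
    case False
    then show ?thesis using ne by (simp add: Vn_nonneg sum_nonneg)
  next
    case True
    define k where "k = (LEAST k. k < N \<and> okc \<theta> n cs k ys)"
    have ex: "\<exists>k<N. okc \<theta> n cs k ys" using True assms by blast
    have dk: "decd \<theta> n N cs ys = k" unfolding decd_def k_def using ex by simp
    have kprop: "k < N \<and> okc \<theta> n cs k ys" unfolding k_def
      by (rule LeastI_ex) (use ex in blast)
    have "k \<in> {..<N}-{m}" using kprop dk ne by auto
    then have "Vn n (cs!m) ys * of_bool (okc \<theta> n cs k ys) \<le>
        (\<Sum>k\<in>{..<N}-{m}. Vn n (cs!m) ys * of_bool (okc \<theta> n cs k ys))"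
      by (intro member_le_sum) (auto simp: Vn_nonneg)
    then show ?thesis using kprop ne by (simp add: Vn_nonneg)
  qed
qed

lemma err_expect:
  assumes N: "0 < N" and th: "0 < \<theta>"
  shows "(\<Sum>cs\<in>lenset (seqs n) N. pcb n N cs * errc \<theta> n N cs) \<le>
    (\<Sum>a\<in>seqs n. \<Sum>y\<in>seqs n. PXn n a * Vn n a y * of_bool (Vn n a y \<le> \<theta> * PYn n y))
    + (real N - 1) / \<theta>"
proof -
  define CB where "CB = lenset (seqs n :: 'x list set) N"
  define A where "A = (\<Sum>a\<in>seqs n. \<Sum>y\<in>seqs n. PXn n a * Vn n a y * of_bool (Vn n a y \<le> \<theta> * PYn n y))"
  define T1 where "T1 = (\<lambda>cs m ys. Vn n (cs!m) ys * of_bool (\<not> okc \<theta> n cs m ys))"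
  define T2 where "T2 = (\<lambda>cs m k ys. Vn n (cs!m) ys * of_bool (okc \<theta> n cs k ys))"
  have fin: "finite CB" unfolding CB_def by (rule finite_cb)
  have step1: "\<And>cs. errc \<theta> n N cs \<le> (1 / real N) * (\<Sum>m<N. \<Sum>ys\<in>seqs n. T1 cs m ys + (\<Sum>k\<in>{..<N}-{m}. T2 cs m k ys))"
    unfolding errc_def T1_def T2_def
    by (intro mult_left_mono sum_mono err_pointwise) auto
  have "(\<Sum>cs\<in>CB. pcb n N cs * errc \<theta> n N cs) \<le>
      (\<Sum>cs\<in>CB. pcb n N cs * ((1 / real N) * (\<Sum>m<N. \<Sum>ys\<in>seqs n. T1 cs m ys + (\<Sum>k\<in>{..<N}-{m}. T2 cs m k ys))))"
    by (intro sum_mono mult_left_mono step1 pcb_nonneg)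
  also have "\<dots> = (1 / real N) * (\<Sum>m<N. \<Sum>ys\<in>seqs n.
        (\<Sum>cs\<in>CB. pcb n N cs * T1 cs m ys) + (\<Sum>k\<in>{..<N}-{m}. \<Sum>cs\<in>CB. pcb n N cs * T2 cs m k ys))"
    by (simp add: sum_distrib_left sum.distrib algebra_simps sum.swap[where A=CB])
  also have "\<dots> \<le> (1 / real N) * (\<Sum>m<N. \<Sum>ys\<in>seqs n.
        (\<Sum>a\<in>seqs n. PXn n a * Vn n a ys * of_bool (Vn n a ys \<le> \<theta> * PYn n ys)) +
        (\<Sum>k\<in>{..<N}-{m}. \<Sum>b\<in>seqs n. PXn n b * Vn n b ys / \<theta>))"
  proof (intro mult_left_mono sum_mono add_mono)
    fix m ys assume m: "m \<in> {..<N}"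
    show "(\<Sum>cs\<in>CB. pcb n N cs * T1 cs m ys) \<le> (\<Sum>a\<in>seqs n. PXn n a * Vn n a ys * of_bool (Vn n a ys \<le> \<theta> * PYn n ys))"
      unfolding CB_def T1_def okc_def using sum_pcb1[of m N n "\<lambda>a. Vn n a ys * of_bool (\<not> \<theta> * PYn n ys < Vn n a ys)"] m
      by (simp add: mult.assoc not_less)
    fix k assume k: "k \<in> {..<N}-{m}"
    have "(\<Sum>cs\<in>CB. pcb n N cs * T2 cs m k ys) =
        (\<Sum>a\<in>seqs n. PXn n a * Vn n a ys) * (\<Sum>b\<in>seqs n. PXn n b * of_bool (\<theta> * PYn n ys < Vn n b ys))"
      unfolding CB_def T2_def okc_def using sum_pcb2[of m N k n "\<lambda>a. Vn n a ys" "\<lambda>b. of_bool (\<theta> * PYn n ys < Vn n b ys)"] m k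
      by auto
    also have "\<dots> = (\<Sum>b\<in>seqs n. PYn n ys * (PXn n b * of_bool (\<theta> * PYn n ys < Vn n b ys)))"
      by (simp only: sum_PXn_Vn sum_distrib_left)
    also have "\<dots> \<le> (\<Sum>b\<in>seqs n. PXn n b * Vn n b ys / \<theta>)"
    proof (rule sum_mono)
      fix b
      show "PYn n ys * (PXn n b * of_bool (\<theta> * PYn n ys < Vn n b ys)) \<le> PXn n b * Vn n b ys / \<theta>"
      proof (cases "\<theta> * PYn n ys < Vn n b ys")
        case True
        then have "PYn n ys \<le> Vn n b ys / \<theta>" using th by (simp add: field_simps)
        then have "PXn n b * PYn n ys \<le> PXn n b * (Vn n b ys / \<theta>)" by (intro mult_left_mono PXn_nonneg)
        then show ?thesis using True by (simp add: algebra_simps)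
      qed (use th in \<open>simp add: PXn_nonneg Vn_nonneg\<close>)
    qed
    finally show "(\<Sum>cs\<in>CB. pcb n N cs * T2 cs m k ys) \<le> (\<Sum>b\<in>seqs n. PXn n b * Vn n b ys / \<theta>)" .
  qed simp
  also have "\<dots> = (1 / real N) * (\<Sum>m<N. A + (real N - 1) / \<theta>)"
  proof -
    have "\<And>m. m < N \<Longrightarrow> (\<Sum>ys\<in>seqs n.
        (\<Sum>a\<in>seqs n. PXn n a * Vn n a ys * of_bool (Vn n a ys \<le> \<theta> * PYn n ys)) +
        (\<Sum>k\<in>{..<N}-{m}. \<Sum>b\<in>seqs n. PXn n b * Vn n b ys / \<theta>)) = A + (real N - 1) / \<theta>"
    proof -
      fix m assume m: "m < N"
      have c: "card ({..<N}-{m}) = N - 1" using m by simp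
      have s1: "(\<Sum>ys\<in>seqs n. \<Sum>a\<in>seqs n. PXn n a * Vn n a ys * of_bool (Vn n a ys \<le> \<theta> * PYn n ys)) = A"
        unfolding A_def by (rule sum.swap)
      have "(\<Sum>ys\<in>seqs n. \<Sum>b\<in>seqs n. PXn n b * Vn n b ys / \<theta>) = (\<Sum>b\<in>seqs n. PXn n b * (\<Sum>ys\<in>seqs n. Vn n b ys)) / \<theta>"
        by (subst sum.swap) (simp add: sum_divide_distrib sum_distrib_left)
      also have "\<dots> = 1 / \<theta>" by (simp add: sum_Vn sum_PXn)
      finally have s2: "(\<Sum>ys\<in>seqs n. \<Sum>b\<in>seqs n. PXn n b * Vn n b ys / \<theta>) = 1 / \<theta>" .
      have "(\<Sum>ys\<in>seqs n. \<Sum>k\<in>{..<N}-{m}. \<Sum>b\<in>seqs n. PXn n b * Vn n b ys / \<theta>)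
          = (\<Sum>k\<in>{..<N}-{m}. \<Sum>ys\<in>seqs n. \<Sum>b\<in>seqs n. PXn n b * Vn n b ys / \<theta>)"
        by (rule sum.swap)
      also have "\<dots> = (real N - 1) / \<theta>" using c m by (simp add: s2 of_nat_diff)
      finally have s3: "(\<Sum>ys\<in>seqs n. \<Sum>k\<in>{..<N}-{m}. \<Sum>b\<in>seqs n. PXn n b * Vn n b ys / \<theta>) = (real N - 1) / \<theta>" .
      show "?thesis m" by (simp only: sum.distrib s1 s3)
    qed
    then show ?thesis by simp
  qed
  also have "\<dots> = A + (real N - 1) / \<theta>" using N by simp
  finally show ?thesis unfolding CB_def A_def .
qed


definition Hf :: "real \<Rightarrow> real" where
  "Hf \<rho> = (\<Sum>x\<in>UNIV. \<Sum>y\<in>UNIV. if PX x * V x y = 0 then 0 else PX x * V x y * exp (\<rho> * ln (PY y / V x y)))"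

lemma PY_pos: "PX x * V x y \<noteq> 0 \<Longrightarrow> 0 < PY y"
proof -
  assume "PX x * V x y \<noteq> 0"
  then have "0 < PX x * V x y" using PX_nonneg[of x] V_nonneg[of x y] by (simp add: less_le)
  also have "PX x * V x y \<le> PY y" unfolding PY_def
    by (rule member_le_sum) (auto intro: mult_nonneg_nonneg PX_nonneg V_nonneg)
  finally show ?thesis .
qed

lemma chernoff_pointwise:
  assumes "0 < \<rho>"
  shows "PXn n a * Vn n a y * of_bool (Vn n a y \<le> exp (real n * t) * PYn n y) \<le>
    exp (\<rho> * (real n * t)) * (\<Prod>i<n. (\<lambda>x y. if PX x * V x y = 0 then 0 else PX x * V x y * exp (\<rho> * ln (PY y / V x y))) (a!i) (y!i))"
proof (cases "\<exists>i<n. PX (a!i) * V (a!i) (y!i) = 0")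
  case True
  then obtain i where i: "i < n" "PX (a!i) * V (a!i) (y!i) = 0" by blast
  have "PXn n a * Vn n a y = (\<Prod>i<n. PX (a!i) * V (a!i) (y!i))"
    unfolding PXn_def Vn_def by (simp add: prod.distrib)
  also have "\<dots> = 0" using i by (intro prod_zero) auto
  finally have z1: "PXn n a * Vn n a y = 0" .
  have z2: "(\<Prod>i<n. (\<lambda>x y. if PX x * V x y = 0 then 0 else PX x * V x y * exp (\<rho> * ln (PY y / V x y))) (a!i) (y!i)) = 0"
    using i by (intro prod_zero) auto
  show ?thesis by (simp only: z1 z2)
next
  case False
  then have pos: "\<And>i. i < n \<Longrightarrow> 0 < PX (a!i) \<and> 0 < V (a!i) (y!i) \<and> 0 < PY (y!i)"
    using PX_nonneg V_nonneg PY_pos by (metis less_eq_real_def mult_zero_left mult_zero_right)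
  have PVpos: "0 < PXn n a * Vn n a y" unfolding PXn_def Vn_def
    using pos by (intro mult_pos_pos prod_pos) auto
  have Vpos: "0 < Vn n a y" unfolding Vn_def using pos by (intro prod_pos) auto
  have PYpos: "0 < PYn n y" unfolding PYn_def using pos by (intro prod_pos) auto
  have "(\<Prod>i<n. (\<lambda>x y. if PX x * V x y = 0 then 0 else PX x * V x y * exp (\<rho> * ln (PY y / V x y))) (a!i) (y!i))
      = (\<Prod>i<n. PX (a!i) * V (a!i) (y!i) * exp (\<rho> * ln (PY (y!i) / V (a!i) (y!i))))"
    using False by (intro prod.cong) auto
  also have "\<dots> = PXn n a * Vn n a y * exp (\<rho> * (\<Sum>i<n. ln (PY (y!i) / V (a!i) (y!i))))"
    unfolding PXn_def Vn_def by (simp add: prod.distrib exp_sum sum_distrib_left)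
  also have "(\<Sum>i<n. ln (PY (y!i) / V (a!i) (y!i))) = ln (PYn n y / Vn n a y)"
  proof -
    have nz: "\<And>i. i \<in> {..<n} \<Longrightarrow> PY (y!i) / V (a!i) (y!i) \<noteq> 0"
      using pos by (metis divide_eq_0_iff lessThan_iff less_irrefl)
    have "ln (\<Prod>i<n. PY (y!i) / V (a!i) (y!i)) = (\<Sum>i<n. ln (PY (y!i) / V (a!i) (y!i)))"
      by (rule ln_prod[OF _ nz]) simp
    then show ?thesis unfolding PYn_def Vn_def by (simp add: prod_dividef)
  qed
  finally have eq: "(\<Prod>i<n. (\<lambda>x y. if PX x * V x y = 0 then 0 else PX x * V x y * exp (\<rho> * ln (PY y / V x y))) (a!i) (y!i))
      = PXn n a * Vn n a y * exp (\<rho> * ln (PYn n y / Vn n a y))" .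
  show ?thesis
  proof (cases "Vn n a y \<le> exp (real n * t) * PYn n y")
    case True
    have "ln (Vn n a y) \<le> ln (exp (real n * t) * PYn n y)"
      using True Vpos PYpos by (subst ln_le_cancel_iff) auto
    also have "\<dots> = real n * t + ln (PYn n y)" using PYpos by (simp add: ln_mult)
    finally have "ln (Vn n a y) \<le> real n * t + ln (PYn n y)" .
    then have "0 \<le> real n * t + ln (PYn n y / Vn n a y)" using Vpos PYpos by (simp add: ln_div)
    then have "0 \<le> \<rho> * (real n * t) + \<rho> * ln (PYn n y / Vn n a y)"
      using assms by (simp add: distrib_left[symmetric])
    then have "1 \<le> exp (\<rho> * (real n * t)) * exp (\<rho> * ln (PYn n y / Vn n a y))"
      by (simp add: exp_add[symmetric])
    then have "PXn n a * Vn n a y * 1 \<le> PXn n a * Vn n a y * (exp (\<rho> * (real n * t)) * exp (\<rho> * ln (PYn n y / Vn n a y)))"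
      using PVpos by (intro mult_left_mono) auto
    then show ?thesis using True by (subst eq) (simp add: algebra_simps)
  next
    case False
    then show ?thesis using PVpos by (subst eq) simp
  qed
qed

lemma chernoff_sum:
  assumes "0 < \<rho>"
  shows "(\<Sum>a\<in>seqs n. \<Sum>y\<in>seqs n. PXn n a * Vn n a y * of_bool (Vn n a y \<le> exp (real n * t) * PYn n y))
     \<le> exp (\<rho> * (real n * t)) * Hf \<rho> ^ n"
proof -
  have "(\<Sum>a\<in>seqs n. \<Sum>y\<in>seqs n. PXn n a * Vn n a y * of_bool (Vn n a y \<le> exp (real n * t) * PYn n y))
     \<le> (\<Sum>a\<in>seqs n. \<Sum>y\<in>seqs n. exp (\<rho> * (real n * t)) * (\<Prod>i<n. (\<lambda>x y. if PX x * V x y = 0 then 0 else PX x * V x y * exp (\<rho> * ln (PY y / V x y))) (a!i) (y!i)))"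
    by (intro sum_mono chernoff_pointwise assms)
  also have "\<dots> = exp (\<rho> * (real n * t)) * (\<Sum>a\<in>seqs n. \<Sum>y\<in>seqs n. \<Prod>i<n. (\<lambda>x y. if PX x * V x y = 0 then 0 else PX x * V x y * exp (\<rho> * ln (PY y / V x y))) (a!i) (y!i))"
    by (simp add: sum_distrib_left)
  also have "(\<Sum>a\<in>seqs n. \<Sum>y\<in>seqs n. \<Prod>i<n. (\<lambda>x y. if PX x * V x y = 0 then 0 else PX x * V x y * exp (\<rho> * ln (PY y / V x y))) (a!i) (y!i)) = Hf \<rho> ^ n"
    unfolding Hf_def by (subst sum_prod_seqs2) simp
  finally show ?thesis .
qed

end


lemma ofb1: "(x::real) * of_bool P = (if P then x else 0)" by simp
lemma ofb3: "(x::real) * (if P then y else 0) = (if P then x * y else 0)" by simp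
lemma ofb2: "of_bool P * (x::real) = (if P then x else 0)" by simp

locale chanZ = chan PX V for PX :: "'x::finite \<Rightarrow> real" and V :: "'x \<Rightarrow> 'y::finite \<Rightarrow> real" +
  assumes PY_posZ: "\<And>y. 0 < PY y"
begin

definition Pc :: "nat \<Rightarrow> nat \<Rightarrow> 'x list list \<Rightarrow> 'y list \<Rightarrow> real" where
  "Pc n N cs z = (1 / real N) * (\<Sum>m<N. Vn n (cs!m) z)"

definition Dc :: "nat \<Rightarrow> nat \<Rightarrow> 'x list list \<Rightarrow> real" where
  "Dc n N cs = kl_div (seqs n) (Pc n N cs) (PYn n)"

definition Tc :: "nat \<Rightarrow> nat \<Rightarrow> 'x list list \<Rightarrow> nat \<Rightarrow> 'y list \<Rightarrow> real" where
  "Tc n N cs m z = (if Vn n (cs!m) z = 0 then 0 else Vn n (cs!m) z * ln (Pc n N cs z / PYn n z))"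

lemma PYn_pos: "0 < PYn n z" unfolding PYn_def by (intro prod_pos PY_posZ)

lemma Pc_nonneg: "0 \<le> Pc n N cs z" unfolding Pc_def by (intro mult_nonneg_nonneg sum_nonneg Vn_nonneg) auto

lemma Pc_ge: "m < N \<Longrightarrow> Vn n (cs!m) z / real N \<le> Pc n N cs z"
proof -
  assume m: "m < N"
  have "Vn n (cs!m) z \<le> (\<Sum>m<N. Vn n (cs!m) z)"
    using m by (intro member_le_sum) (auto simp: Vn_nonneg)
  then show ?thesis unfolding Pc_def by (simp add: divide_right_mono)
qed

lemma Dc_eq:
  assumes N: "0 < N"
  shows "Dc n N cs = (1 / real N) * (\<Sum>m<N. \<Sum>z\<in>seqs n. Tc n N cs m z)"
proof -
  have "\<And>z. (if Pc n N cs z = 0 then 0 else Pc n N cs z * ln (Pc n N cs z / PYn n z))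
      = (1 / real N) * (\<Sum>m<N. Tc n N cs m z)"
  proof -
    fix z
    show "(if Pc n N cs z = 0 then 0 else Pc n N cs z * ln (Pc n N cs z / PYn n z))
      = (1 / real N) * (\<Sum>m<N. Tc n N cs m z)"
    proof (cases "Pc n N cs z = 0")
      case True
      then have "(\<Sum>m<N. Vn n (cs!m) z) = 0" using N unfolding Pc_def by simp
      then have "\<And>m. m < N \<Longrightarrow> Vn n (cs!m) z = 0"
        by (subst (asm) sum_nonneg_eq_0_iff) (auto simp: Vn_nonneg)
      then show ?thesis using True unfolding Tc_def by simp
    next
      case False
      have "Pc n N cs z * ln (Pc n N cs z / PYn n z) = (1 / real N) * (\<Sum>m<N. Vn n (cs!m) z * ln (Pc n N cs z / PYn n z))"
        unfolding Pc_def by (simp add: sum_distrib_right)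
      also have "(\<Sum>m<N. Vn n (cs!m) z * ln (Pc n N cs z / PYn n z)) = (\<Sum>m<N. Tc n N cs m z)"
        unfolding Tc_def by (intro sum.cong) auto
      finally show ?thesis using False by simp
    qed
  qed
  then show ?thesis unfolding Dc_def kl_div_def
    by (simp add: sum_distrib_left sum.swap[of _ "{..<N}"])
qed


lemma Tc_expect:
  assumes N: "0 < N" and m: "m < N"
  shows "(\<Sum>cs\<in>lenset (seqs n) N. pcb n N cs * Tc n N cs m z) \<le>
    (\<Sum>a\<in>seqs n. if PXn n a * Vn n a z = 0 then 0 else PXn n a * Vn n a z * ln (1 + Vn n a z / (real N * PYn n z)))"
proof -
  define CB where "CB = lenset (seqs n :: 'x list set) N"
  have fin: "finite CB" unfolding CB_def by (rule finite_cb)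
  have "(\<Sum>cs\<in>CB. pcb n N cs * Tc n N cs m z) = (\<Sum>cs\<in>CB. \<Sum>a\<in>seqs n. pcb n N cs * of_bool (cs!m = a) * Tc n N cs m z)"
  proof (rule sum.cong[OF refl])
    fix cs assume cs: "cs \<in> CB"
    have "cs!m \<in> seqs n" using cs m unfolding CB_def by (rule lenset_seqs_nth)
    then have "(\<Sum>a\<in>seqs n. pcb n N cs * of_bool (cs!m = a) * Tc n N cs m z) = pcb n N cs * Tc n N cs m z"
      by (simp add: sum_distrib_right[symmetric] sum_distrib_left[symmetric] of_bool_def sum.If_cases)
    then show "pcb n N cs * Tc n N cs m z = (\<Sum>a\<in>seqs n. pcb n N cs * of_bool (cs!m = a) * Tc n N cs m z)" by simp
  qed
  also have "\<dots> = (\<Sum>a\<in>seqs n. \<Sum>cs\<in>CB. pcb n N cs * of_bool (cs!m = a) * Tc n N cs m z)"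
    by (rule sum.swap)
  also have "\<dots> \<le> (\<Sum>a\<in>seqs n. if PXn n a * Vn n a z = 0 then 0 else PXn n a * Vn n a z * ln (1 + Vn n a z / (real N * PYn n z)))"
  proof (rule sum_mono)
    fix a :: "'x list" assume a: "a \<in> seqs n"
    define w where "w = (\<lambda>cs. pcb n N cs * of_bool (cs!m = a))"
    have w_nonneg: "\<And>cs. 0 \<le> w cs" unfolding w_def by (simp add: pcb_nonneg)
    have Wsum: "sum w CB = PXn n a"
      unfolding w_def CB_def using sum_pcb1[OF m, of n "\<lambda>b. of_bool (b = a)"] a
      by (simp add: ofb1 ofb2 ofb3)
    have eqT: "\<And>cs. w cs * Tc n N cs m z = w cs * (if Vn n a z = 0 then 0 else Vn n a z * ln (Pc n N cs z / PYn n z))"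
      unfolding w_def Tc_def by auto
    show "(\<Sum>cs\<in>CB. pcb n N cs * of_bool (cs!m = a) * Tc n N cs m z) \<le>
      (if PXn n a * Vn n a z = 0 then 0 else PXn n a * Vn n a z * ln (1 + Vn n a z / (real N * PYn n z)))"
    proof (cases "PXn n a * Vn n a z = 0")
      case PV0: True
      show ?thesis
      proof (cases "Vn n a z = 0")
        case True
        have "\<And>cs. pcb n N cs * of_bool (cs!m = a) * Tc n N cs m z = 0"
          using eqT True unfolding w_def by simp
        then have "(\<Sum>cs\<in>CB. pcb n N cs * of_bool (cs!m = a) * Tc n N cs m z) = 0"
          by (intro sum.neutral) auto
        then show ?thesis using PV0 by simp
      next
        case False
        then have "PXn n a = 0" using PV0 by simp
        then have "\<And>cs. cs \<in> CB \<Longrightarrow> w cs = 0" using Wsum fin w_nonneg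
          by (metis sum_nonneg_eq_0_iff)
        then have "(\<Sum>cs\<in>CB. pcb n N cs * of_bool (cs!m = a) * Tc n N cs m z) = 0"
          unfolding w_def by (intro sum.neutral) auto
        then show ?thesis using PV0 by simp
      qed
    next
      case False
      then have Ppos: "0 < PXn n a" and Vpos: "0 < Vn n a z"
        using PXn_nonneg[of n a] Vn_nonneg[of n a z] by (auto simp: less_le)
      define x where "x = (\<lambda>cs. Pc n N cs z / PYn n z)"
      have xpos: "\<And>cs. cs \<in> CB \<Longrightarrow> 0 < w cs \<Longrightarrow> 0 < x cs"
      proof -
        fix cs assume "cs \<in> CB" "0 < w cs"
        then have "cs!m = a" unfolding w_def by (cases "cs!m = a") auto
        then have "Vn n a z / real N \<le> Pc n N cs z" using Pc_ge[OF m] by blast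
        moreover have "0 < Vn n a z / real N" using Vpos N by simp
        ultimately show "0 < x cs" unfolding x_def using PYn_pos[of n z] by simp
      qed
      have J: "(\<Sum>cs\<in>CB. w cs * ln (x cs)) \<le> sum w CB * ln ((\<Sum>cs\<in>CB. w cs * x cs) / sum w CB)"
        by (rule jensen_ln[OF fin w_nonneg xpos]) (use Wsum Ppos in auto)
      have "(\<Sum>cs\<in>CB. w cs * x cs) = (1 / (real N * PYn n z)) * (\<Sum>m'<N. \<Sum>cs\<in>CB. pcb n N cs * (of_bool (cs!m = a) * Vn n (cs!m') z))"
        unfolding w_def x_def Pc_def
        by (simp add: sum_distrib_left sum_divide_distrib sum.swap[of _ CB] algebra_simps)
      also have "(\<Sum>m'<N. \<Sum>cs\<in>CB. pcb n N cs * (of_bool (cs!m = a) * Vn n (cs!m') z))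
          = (\<Sum>m'<N. if m' = m then PXn n a * Vn n a z else PXn n a * PYn n z)"
      proof (rule sum.cong[OF refl])
        fix m' assume m': "m' \<in> {..<N}"
        show "(\<Sum>cs\<in>CB. pcb n N cs * (of_bool (cs!m = a) * Vn n (cs!m') z))
          = (if m' = m then PXn n a * Vn n a z else PXn n a * PYn n z)"
        proof (cases "m' = m")
          case True
          then show ?thesis unfolding CB_def
            using sum_pcb1[OF m, of n "\<lambda>b. of_bool (b = a) * Vn n b z"] a
            by (simp add: ofb1 ofb2 ofb3)
        next
          case False
          have "(\<Sum>cs\<in>CB. pcb n N cs * (of_bool (cs!m = a) * Vn n (cs!m') z))
             = (\<Sum>b\<in>seqs n. PXn n b * of_bool (b = a)) * (\<Sum>b\<in>seqs n. PXn n b * Vn n b z)"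
            unfolding CB_def using sum_pcb2[OF m, of m' n "\<lambda>b. of_bool (b = a)" "\<lambda>b. Vn n b z"] m' False
            by auto
          also have "\<dots> = PXn n a * PYn n z"
            using a by (simp add: sum_PXn_Vn ofb1 ofb2 ofb3)
          finally show ?thesis using False by simp
        qed
      qed
      also have "\<dots> = PXn n a * Vn n a z + (real N - 1) * (PXn n a * PYn n z)"
      proof -
        have c: "{..<N} \<inter> - {m} = {..<N} - {m}" by auto
        have "card ({..<N} - {m}) = N - 1" using m by simp
        then show ?thesis using m by (simp add: sum.If_cases Int_absorb1 of_nat_diff c algebra_simps)
      qed
      finally have sx: "(\<Sum>cs\<in>CB. w cs * x cs) = (PXn n a * Vn n a z + (real N - 1) * (PXn n a * PYn n z)) / (real N * PYn n z)"
        by simp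
      have ratio: "(\<Sum>cs\<in>CB. w cs * x cs) / sum w CB = Vn n a z / (real N * PYn n z) + (real N - 1) / real N"
        unfolding sx Wsum using Ppos PYn_pos[of n z] N by (simp add: field_simps)
      have "(\<Sum>cs\<in>CB. pcb n N cs * of_bool (cs!m = a) * Tc n N cs m z) = Vn n a z * (\<Sum>cs\<in>CB. w cs * ln (x cs))"
      proof -
        have "\<And>cs. pcb n N cs * of_bool (cs!m = a) * Tc n N cs m z = Vn n a z * (w cs * ln (x cs))"
          using eqT Vpos unfolding w_def x_def by simp
        then show ?thesis by (simp add: sum_distrib_left)
      qed
      also have "\<dots> \<le> Vn n a z * (PXn n a * ln (Vn n a z / (real N * PYn n z) + (real N - 1) / real N))"
      proof -
        have r2: "(\<Sum>cs\<in>CB. w cs * x cs) / PXn n a = Vn n a z / (real N * PYn n z) + (real N - 1) / real N"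
          using ratio Wsum by simp
        show ?thesis using J Vpos unfolding Wsum r2 by (intro mult_left_mono) auto
      qed
      also have "\<dots> \<le> Vn n a z * (PXn n a * ln (1 + Vn n a z / (real N * PYn n z)))"
      proof -
        have "0 < Vn n a z / (real N * PYn n z)" using Vpos N PYn_pos[of n z] by simp
        moreover have "0 \<le> (real N - 1) / real N" using N by simp
        moreover have "(real N - 1) / real N \<le> 1" using N by simp
        ultimately have "ln (Vn n a z / (real N * PYn n z) + (real N - 1) / real N) \<le> ln (1 + Vn n a z / (real N * PYn n z))"
          by (subst ln_le_cancel_iff) auto
        then show ?thesis using Vpos Ppos by (intro mult_left_mono) auto
      qed
      finally show ?thesis using False by (simp add: algebra_simps)
    qed
  qed
  finally show ?thesis unfolding CB_def .
qed


definition Gf :: "real \<Rightarrow> real" where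
  "Gf \<rho> = (\<Sum>x\<in>UNIV. \<Sum>y\<in>UNIV. if PX x * V x y = 0 then 0 else PX x * V x y * exp (\<rho> * ln (V x y / PY y)))"

lemma res_pointwise:
  assumes r: "0 < \<rho>" "\<rho> \<le> 1" and N: "0 < N"
  shows "(if PXn n a * Vn n a z = 0 then 0 else PXn n a * Vn n a z * ln (1 + Vn n a z / (real N * PYn n z)))
    \<le> exp (- (\<rho> * ln (real N))) / \<rho> *
       (\<Prod>i<n. (\<lambda>x y. if PX x * V x y = 0 then 0 else PX x * V x y * exp (\<rho> * ln (V x y / PY y))) (a!i) (z!i))"
proof (cases "\<exists>i<n. PX (a!i) * V (a!i) (z!i) = 0")
  case True
  then obtain i where i: "i < n" "PX (a!i) * V (a!i) (z!i) = 0" by blast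
  have "PXn n a * Vn n a z = (\<Prod>i<n. PX (a!i) * V (a!i) (z!i))"
    unfolding PXn_def Vn_def by (simp add: prod.distrib)
  also have "\<dots> = 0" using i by (intro prod_zero) auto
  finally have z1: "PXn n a * Vn n a z = 0" .
  have z2: "(\<Prod>i<n. (\<lambda>x y. if PX x * V x y = 0 then 0 else PX x * V x y * exp (\<rho> * ln (V x y / PY y))) (a!i) (z!i)) = 0"
    using i by (intro prod_zero) auto
  show ?thesis by (simp only: z1 z2) simp
next
  case False
  then have pos: "\<And>i. i < n \<Longrightarrow> 0 < PX (a!i) \<and> 0 < V (a!i) (z!i)"
    using PX_nonneg V_nonneg by (metis less_eq_real_def mult_zero_left mult_zero_right)
  have PVpos: "0 < PXn n a * Vn n a z" unfolding PXn_def Vn_def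
    using pos by (intro mult_pos_pos prod_pos) auto
  have Vpos: "0 < Vn n a z" unfolding Vn_def using pos by (intro prod_pos) auto
  have PYpos: "0 < PYn n z" by (rule PYn_pos)
  have "(\<Prod>i<n. (\<lambda>x y. if PX x * V x y = 0 then 0 else PX x * V x y * exp (\<rho> * ln (V x y / PY y))) (a!i) (z!i))
      = (\<Prod>i<n. PX (a!i) * V (a!i) (z!i) * exp (\<rho> * ln (V (a!i) (z!i) / PY (z!i))))"
    using False by (intro prod.cong) auto
  also have "\<dots> = PXn n a * Vn n a z * exp (\<rho> * (\<Sum>i<n. ln (V (a!i) (z!i) / PY (z!i))))"
    unfolding PXn_def Vn_def by (simp add: prod.distrib exp_sum sum_distrib_left)
  also have "(\<Sum>i<n. ln (V (a!i) (z!i) / PY (z!i))) = ln (Vn n a z / PYn n z)"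
  proof -
    have nz: "\<And>i. i \<in> {..<n} \<Longrightarrow> V (a!i) (z!i) / PY (z!i) \<noteq> 0"
      using pos PY_posZ by (metis divide_eq_0_iff lessThan_iff less_irrefl)
    have "ln (\<Prod>i<n. V (a!i) (z!i) / PY (z!i)) = (\<Sum>i<n. ln (V (a!i) (z!i) / PY (z!i)))"
      by (rule ln_prod[OF _ nz]) simp
    then show ?thesis unfolding PYn_def Vn_def by (simp add: prod_dividef)
  qed
  finally have eq: "(\<Prod>i<n. (\<lambda>x y. if PX x * V x y = 0 then 0 else PX x * V x y * exp (\<rho> * ln (V x y / PY y))) (a!i) (z!i))
      = PXn n a * Vn n a z * exp (\<rho> * ln (Vn n a z / PYn n z))" .
  define u where "u = Vn n a z / (real N * PYn n z)"
  have upos: "0 < u" unfolding u_def using Vpos PYpos N by simp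
  have lnu: "ln u = ln (Vn n a z / PYn n z) - ln (real N)"
    unfolding u_def using Vpos PYpos N by (simp add: ln_div ln_mult)
  have "ln (1 + u) \<le> exp (\<rho> * ln u) / \<rho>" by (rule ln_one_plus_le[OF upos r])
  also have "exp (\<rho> * ln u) = exp (- (\<rho> * ln (real N))) * exp (\<rho> * ln (Vn n a z / PYn n z))"
    unfolding lnu by (simp add: exp_add[symmetric] algebra_simps)
  finally have "ln (1 + u) \<le> exp (- (\<rho> * ln (real N))) * exp (\<rho> * ln (Vn n a z / PYn n z)) / \<rho>" .
  then have "PXn n a * Vn n a z * ln (1 + u) \<le> PXn n a * Vn n a z * (exp (- (\<rho> * ln (real N))) * exp (\<rho> * ln (Vn n a z / PYn n z)) / \<rho>)"
    using PVpos by (intro mult_left_mono) auto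
  then show ?thesis using PVpos unfolding u_def by (subst eq) (simp add: algebra_simps)
qed

lemma D_expect:
  assumes r: "0 < \<rho>" "\<rho> \<le> 1" and N: "0 < N"
  shows "(\<Sum>cs\<in>lenset (seqs n) N. pcb n N cs * Dc n N cs) \<le> exp (- (\<rho> * ln (real N))) / \<rho> * Gf \<rho> ^ n"
proof -
  define CB where "CB = lenset (seqs n :: 'x list set) N"
  define F where "F = (\<lambda>a z. if PXn n a * Vn n a z = 0 then 0 else PXn n a * Vn n a z * ln (1 + Vn n a z / (real N * PYn n z)))"
  have "(\<Sum>cs\<in>CB. pcb n N cs * Dc n N cs) = (1 / real N) * (\<Sum>m<N. \<Sum>z\<in>seqs n. \<Sum>cs\<in>CB. pcb n N cs * Tc n N cs m z)"
    by (simp add: Dc_eq[OF N] sum_distrib_left sum.swap[where A=CB] algebra_simps)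
  also have "\<dots> \<le> (1 / real N) * (\<Sum>m<N. \<Sum>z\<in>seqs n. \<Sum>a\<in>seqs n. F a z)"
    unfolding CB_def F_def by (intro mult_left_mono sum_mono Tc_expect N) auto
  also have "\<dots> = (\<Sum>z\<in>seqs n. \<Sum>a\<in>seqs n. F a z)" using N by simp
  also have "\<dots> = (\<Sum>a\<in>seqs n. \<Sum>z\<in>seqs n. F a z)" by (rule sum.swap)
  also have "\<dots> \<le> (\<Sum>a\<in>seqs n. \<Sum>z\<in>seqs n. exp (- (\<rho> * ln (real N))) / \<rho> *
       (\<Prod>i<n. (\<lambda>x y. if PX x * V x y = 0 then 0 else PX x * V x y * exp (\<rho> * ln (V x y / PY y))) (a!i) (z!i)))"
    unfolding F_def by (intro sum_mono res_pointwise r N)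
  also have "\<dots> = exp (- (\<rho> * ln (real N))) / \<rho> * (\<Sum>a\<in>seqs n. \<Sum>z\<in>seqs n.
       (\<Prod>i<n. (\<lambda>x y. if PX x * V x y = 0 then 0 else PX x * V x y * exp (\<rho> * ln (V x y / PY y))) (a!i) (z!i)))"
    by (simp add: sum_distrib_left)
  also have "(\<Sum>a\<in>seqs n. \<Sum>z\<in>seqs n.
       (\<Prod>i<n. (\<lambda>x y. if PX x * V x y = 0 then 0 else PX x * V x y * exp (\<rho> * ln (V x y / PY y))) (a!i) (z!i))) = Gf \<rho> ^ n"
    unfolding Gf_def by (subst sum_prod_seqs2) simp
  finally show ?thesis unfolding CB_def .
qed

end


lemma sum_pair_UNIV2:
  fixes g :: "'a::finite \<times> 'b::finite \<Rightarrow> real"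
  shows "(\<Sum>k\<in>UNIV. g k) = (\<Sum>x\<in>UNIV. \<Sum>y\<in>UNIV. g (x, y))"
  unfolding sum.cartesian_product UNIV_Times_UNIV by simp

context chan
begin

definition MI :: real where
  "MI = (\<Sum>x\<in>UNIV. \<Sum>y\<in>UNIV. if PX x * V x y = 0 then 0 else PX x * V x y * ln (V x y / PY y))"

lemma MI_term:
  "(if PX x * V x y = 0 then 0 else PX x * V x y * log 2 (PX x * V x y / (PX x * PY y))) * ln 2 =
   (if PX x * V x y = 0 then 0 else PX x * V x y * ln (V x y / PY y))"
proof (cases "PX x * V x y = 0")
  case False
  then have "PX x \<noteq> 0" by simp
  then have e: "PX x * V x y / (PX x * PY y) = V x y / PY y" by simp
  have "log 2 (V x y / PY y) * ln 2 = ln (V x y / PY y)" by (simp add: log_def)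
  then show ?thesis using False by (simp only: e if_False) (simp add: algebra_simps)
qed simp

lemma MI_eq: "mutual_info (\<lambda>x y. PX x * V x y) * ln 2 = MI"
proof -
  have m1: "\<And>a. (\<Sum>b'\<in>UNIV. PX a * V a b') = PX a" by (simp add: sum_distrib_left[symmetric] V_sum)
  have m2: "\<And>b. (\<Sum>a'\<in>UNIV. PX a' * V a' b) = PY b" by (simp add: PY_def)
  have "mutual_info (\<lambda>x y. PX x * V x y) * ln 2 = (\<Sum>x\<in>UNIV. \<Sum>y\<in>UNIV.
      (if PX x * V x y = 0 then 0 else PX x * V x y * log 2 (PX x * V x y / (PX x * PY y))) * ln 2)"
    unfolding mutual_info_def m1 m2 by (simp only: sum_distrib_right)
  also have "\<dots> = MI" unfolding MI_def by (simp only: MI_term)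
  finally show ?thesis .
qed

lemma c_sum: "(\<Sum>x\<in>UNIV. \<Sum>y\<in>UNIV. if PX x * V x y = 0 then 0 else PX x * V x y) = 1"
proof -
  have "(\<Sum>x\<in>UNIV. \<Sum>y\<in>UNIV. if PX x * V x y = 0 then 0 else PX x * V x y) = (\<Sum>x\<in>UNIV. \<Sum>y\<in>UNIV. PX x * V x y)"
    by (intro sum.cong refl) auto
  also have "\<dots> = 1" by (simp add: sum_distrib_left[symmetric] V_sum PX_sum)
  finally show ?thesis .
qed

lemma exists_rho_H:
  assumes "b - MI < 0"
  shows "\<exists>\<rho>>0. \<rho> < 1 \<and> exp (\<rho> * b) * Hf \<rho> < 1"
proof -
  define c where "c = (\<lambda>(x::'x, y::'y). if PX x * V x y = 0 then 0 else PX x * V x y)"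
  define d where "d = (\<lambda>(x::'x, y::'y). ln (PY y / V x y))"
  have cs: "(\<Sum>k\<in>UNIV. c k) = 1" unfolding sum_pair_UNIV2 using c_sum by (simp add: c_def)
  have cd: "(\<Sum>k\<in>UNIV. c k * d k) = - MI"
  proof -
    have "(\<Sum>k\<in>UNIV. c k * d k) = (\<Sum>x\<in>UNIV. \<Sum>y\<in>UNIV. - (if PX x * V x y = 0 then 0 else PX x * V x y * ln (V x y / PY y)))"
      unfolding sum_pair_UNIV2
    proof (intro sum.cong refl)
      fix x y
      show "c (x, y) * d (x, y) =
            - (if PX x * V x y = 0 then 0 else PX x * V x y * ln (V x y / PY y))"
      proof (cases "PX x * V x y = 0")
        case False
        then have "0 < V x y" "0 < PY y" using V_nonneg[of x y] PY_pos[OF False] by (auto simp: less_le)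
        then have "ln (PY y / V x y) = - ln (V x y / PY y)" by (simp add: ln_div)
        then show ?thesis using False unfolding c_def d_def by simp
      qed (simp add: c_def)
    qed
    then show ?thesis unfolding MI_def by (simp add: sum_negf)
  qed
  have ce: "\<And>\<rho>. (\<Sum>k\<in>UNIV. c k * exp (\<rho> * d k)) = Hf \<rho>"
    unfolding Hf_def sum_pair_UNIV2 by (intro sum.cong refl) (simp add: c_def d_def)
  from exists_rho[of UNIV c b d] cs cd assms show ?thesis by (simp add: ce)
qed

lemma Hf_nonneg: "0 \<le> Hf \<rho>" unfolding Hf_def
  by (intro sum_nonneg) (auto intro!: mult_nonneg_nonneg PX_nonneg V_nonneg)

end

context chanZ
begin

lemma exists_rho_G:
  assumes "b + MI < 0"
  shows "\<exists>\<rho>>0. \<rho> < 1 \<and> exp (\<rho> * b) * Gf \<rho> < 1"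
proof -
  define c where "c = (\<lambda>(x::'x, y::'y). if PX x * V x y = 0 then 0 else PX x * V x y)"
  define d where "d = (\<lambda>(x::'x, y::'y). ln (V x y / PY y))"
  have cs: "(\<Sum>k\<in>UNIV. c k) = 1" unfolding sum_pair_UNIV2 using c_sum by (simp add: c_def)
  have cd: "(\<Sum>k\<in>UNIV. c k * d k) = MI"
    unfolding MI_def sum_pair_UNIV2 by (intro sum.cong refl) (simp add: c_def d_def)
  have ce: "\<And>\<rho>. (\<Sum>k\<in>UNIV. c k * exp (\<rho> * d k)) = Gf \<rho>"
    unfolding Gf_def sum_pair_UNIV2 by (intro sum.cong refl) (simp add: c_def d_def)
  from exists_rho[of UNIV c b d] cs cd assms show ?thesis by (simp add: ce)
qed

lemma Gf_nonneg: "0 \<le> Gf \<rho>" unfolding Gf_def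
  by (intro sum_nonneg) (auto intro!: mult_nonneg_nonneg PX_nonneg V_nonneg)

lemma sum_Pc: "0 < N \<Longrightarrow> (\<Sum>z\<in>seqs n. Pc n N cs z) = 1"
proof -
  assume N: "0 < N"
  have "(\<Sum>z\<in>seqs n. Pc n N cs z) = (1 / real N) * (\<Sum>z\<in>seqs n. \<Sum>m<N. Vn n (cs!m) z)"
    unfolding Pc_def by (simp add: sum_distrib_left)
  also have "(\<Sum>z\<in>seqs n. \<Sum>m<N. Vn n (cs!m) z) = (\<Sum>m<N. \<Sum>z\<in>seqs n. Vn n (cs!m) z)"
    by (rule sum.swap)
  also have "\<dots> = real N" by (simp add: sum_Vn)
  finally show ?thesis using N by simp
qed

lemma sum_PYn: "(\<Sum>z\<in>seqs n. PYn n z) = 1"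
proof -
  have "(\<Sum>y\<in>UNIV. PY y) = 1" unfolding PY_def
    by (subst sum.swap) (simp add: sum_distrib_left[symmetric] V_sum PX_sum)
  then show ?thesis unfolding PYn_def using sum_prod_seqs[where f="\<lambda>i y. PY y" and n=n] by simp
qed

lemma Dc_nonneg: "0 < N \<Longrightarrow> 0 \<le> Dc n N cs"
  unfolding Dc_def by (rule kl_nonneg) (auto simp: Pc_nonneg PYn_pos sum_Pc sum_PYn)

end


lemma num_msgs_ge: "2 powr (real n * r) \<le> real (num_msgs r n)"
  unfolding num_msgs_def by (rule real_nat_ceiling_ge)

lemma num_msgs_le: "real (num_msgs r n) - 1 \<le> 2 powr (real n * r)"
proof -
  have "0 \<le> \<lceil>2 powr (real n * r)\<rceil>" 
  proof -
    have "(0::real) \<le> 2 powr (real n * r)" by simp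
    also have "\<dots> \<le> of_int \<lceil>2 powr (real n * r)\<rceil>" by (rule le_of_int_ceiling)
    finally show ?thesis by simp
  qed
  then have "real (num_msgs r n) = of_int \<lceil>2 powr (real n * r)\<rceil>" unfolding num_msgs_def by simp
  then show ?thesis using of_int_ceiling_le_add_one[of "2 powr (real n * r)"] by simp
qed

lemma num_msgs_pos: "0 < num_msgs r n"
proof -
  have "0 < 2 powr (real n * r)" by simp
  also have "\<dots> \<le> real (num_msgs r n)" by (rule num_msgs_ge)
  finally show ?thesis by simp
qed


lemma W_facts:
  fixes W :: "'x \<Rightarrow> 's \<Rightarrow> 'y::finite \<Rightarrow> 'z::finite \<Rightarrow> real"
  assumes "\<And>x s. is_pmf (\<lambda>(y, z). W x s y z)"
  shows W_nonneg: "0 \<le> W x s y z" and W_sum: "(\<Sum>y\<in>UNIV. \<Sum>z\<in>UNIV. W x s y z) = 1"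
proof -
  have p: "is_pmf (\<lambda>(y, z). W x s y z)" by (rule assms)
  show "0 \<le> W x s y z" using p unfolding is_pmf_def by (metis case_prod_conv)
  have "(\<Sum>a\<in>UNIV. (\<lambda>(y, z). W x s y z) a) = 1" using p unfolding is_pmf_def by blast
  then show "(\<Sum>y\<in>UNIV. \<Sum>z\<in>UNIV. W x s y z) = 1" unfolding sum_pair_UNIV2 by simp
qed

lemma chan_Y:
  fixes Q :: "'s::finite \<Rightarrow> real" and W :: "'x::finite \<Rightarrow> 's \<Rightarrow> 'y::finite \<Rightarrow> 'z::finite \<Rightarrow> real"
  assumes "is_pmf Q" "\<And>x s. is_pmf (\<lambda>(y, z). W x s y z)" "is_pmf PX"
  shows "chan PX (VY Q W)"
proof
  show "\<And>x. 0 \<le> PX x" "(\<Sum>x\<in>UNIV. PX x) = 1" using assms(3) unfolding is_pmf_def by auto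
  show "\<And>x y. 0 \<le> VY Q W x y" unfolding VY_def using assms(1) W_nonneg[OF assms(2)]
    by (intro sum_nonneg mult_nonneg_nonneg) (auto simp: is_pmf_def)
  fix x
  have "(\<Sum>y\<in>UNIV. VY Q W x y) = (\<Sum>s\<in>UNIV. Q s * (\<Sum>y\<in>UNIV. \<Sum>z\<in>UNIV. W x s y z))"
    unfolding VY_def by (subst sum.swap) (simp add: sum_distrib_left)
  also have "\<dots> = 1"
  proof -
    have Ws: "\<And>s. (\<Sum>y\<in>UNIV. \<Sum>z\<in>UNIV. W x s y z) = 1" by (rule W_sum[OF assms(2)])
    show ?thesis using assms(1) by (simp add: is_pmf_def Ws)
  qed
  finally show "(\<Sum>y\<in>UNIV. VY Q W x y) = 1" .
qed

lemma chan_Z: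
  fixes Q :: "'s::finite \<Rightarrow> real" and W :: "'x::finite \<Rightarrow> 's \<Rightarrow> 'y::finite \<Rightarrow> 'z::finite \<Rightarrow> real"
  assumes "is_pmf Q" "\<And>x s. is_pmf (\<lambda>(y, z). W x s y z)" "is_pmf PX"
  shows "chan PX (VZ Q W)"
proof
  show "\<And>x. 0 \<le> PX x" "(\<Sum>x\<in>UNIV. PX x) = 1" using assms(3) unfolding is_pmf_def by auto
  show "\<And>x y. 0 \<le> VZ Q W x y" unfolding VZ_def using assms(1) W_nonneg[OF assms(2)]
    by (intro sum_nonneg mult_nonneg_nonneg) (auto simp: is_pmf_def)
  fix x
  have "(\<Sum>z\<in>UNIV. VZ Q W x z) = (\<Sum>s\<in>UNIV. Q s * (\<Sum>z\<in>UNIV. \<Sum>y\<in>UNIV. W x s y z))"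
    unfolding VZ_def by (subst sum.swap) (simp add: sum_distrib_left)
  also have "\<dots> = (\<Sum>s\<in>UNIV. Q s * (\<Sum>y\<in>UNIV. \<Sum>z\<in>UNIV. W x s y z))"
    by (subst (2) sum.swap) simp
  also have "\<dots> = 1"
  proof -
    have Ws: "\<And>s. (\<Sum>y\<in>UNIV. \<Sum>z\<in>UNIV. W x s y z) = 1" by (rule W_sum[OF assms(2)])
    show ?thesis using assms(1) by (simp add: is_pmf_def Ws)
  qed
  finally show "(\<Sum>z\<in>UNIV. VZ Q W x z) = 1" .
qed

lemma joint_XY_eq: "joint_XY Q W PX = (\<lambda>x y. PX x * VY Q W x y)"
  unfolding joint_XY_def VY_def by (intro ext) (simp add: sum_distrib_left mult.assoc mult.commute mult.left_commute)

lemma joint_XZ_eq: "joint_XZ Q W PX = (\<lambda>x z. PX x * VZ Q W x z)"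
  unfolding joint_XZ_def VZ_def by (intro ext) (simp add: sum_distrib_left mult.assoc mult.commute mult.left_commute)

lemma marg_Z_eq: "chan PX (VZ Q W) \<Longrightarrow> marg_Z Q W PX z = chan.PY PX (VZ Q W) z"
  by (simp add: marg_Z_def chan.PY_def joint_XZ_eq)

lemma innocent_eq: "innocent_dist Q W x0 = VZ Q W x0"
  unfolding innocent_dist_def VZ_def ..


lemma achievable:
  fixes Q :: "'s::finite \<Rightarrow> real" and W :: "'x::finite \<Rightarrow> 's \<Rightarrow> 'y::finite \<Rightarrow> 'z::finite \<Rightarrow> real"
    and x0 :: 'x and PX :: "'x \<Rightarrow> real"
  assumes Qp: "is_pmf Q" and Wp: "\<And>x s. is_pmf (\<lambda>(y, z). W x s y z)"
    and inn: "\<And>z. innocent_dist Q W x0 z > 0"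
    and PXD: "PX \<in> set_D Q W x0"
    and r1: "mutual_info (joint_XZ Q W PX) < r" and r2: "r < mutual_info (joint_XY Q W PX)"
  shows "covert_achievable_SCT Q W x0 r"
proof -
  have PXp: "is_pmf PX" and mZ: "marg_Z Q W PX = innocent_dist Q W x0" using PXD unfolding set_D_def by auto
  interpret cY: chan PX "VY Q W" by (rule chan_Y[OF Qp Wp PXp])
  have cZc: "chan PX (VZ Q W)" by (rule chan_Z[OF Qp Wp PXp])
  have PYZ: "\<And>z. chan.PY PX (VZ Q W) z = innocent_dist Q W x0 z"
    using mZ marg_Z_eq[OF cZc] by metis
  interpret cZ: chanZ PX "VZ Q W"
    by (intro chanZ.intro cZc chanZ_axioms.intro) (simp add: PYZ inn)
  define IY where "IY = mutual_info (joint_XY Q W PX)"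
  define IZ where "IZ = mutual_info (joint_XZ Q W PX)"
  have MIY: "cY.MI = IY * ln 2" using cY.MI_eq unfolding IY_def joint_XY_eq by simp
  have MIZ: "cZ.MI = IZ * ln 2" using cZ.MI_eq unfolding IZ_def joint_XZ_eq by simp
  have l2: "0 < ln (2::real)" by simp
  define t where "t = (r + IY) / 2 * ln 2"
  have "t - cY.MI < 0" unfolding MIY t_def using r2 l2 unfolding IY_def[symmetric]
    by (simp add: field_simps)
  then obtain \<rho>1 where \<rho>1: "\<rho>1 > 0" "\<rho>1 < 1" "exp (\<rho>1 * t) * cY.Hf \<rho>1 < 1"
    using cY.exists_rho_H by blast
  have "- (r * ln 2) + cZ.MI < 0" unfolding MIZ using r1 l2 unfolding IZ_def[symmetric]
    by (simp add: field_simps)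
  then obtain \<rho>2 where \<rho>2: "\<rho>2 > 0" "\<rho>2 < 1" "exp (\<rho>2 * - (r * ln 2)) * cZ.Gf \<rho>2 < 1"
    using cZ.exists_rho_G by blast
  define \<Psi> where "\<Psi> = exp (\<rho>1 * t) * cY.Hf \<rho>1"
  define \<Phi> where "\<Phi> = exp (\<rho>2 * - (r * ln 2)) * cZ.Gf \<rho>2"
  define \<kappa> where "\<kappa> = exp (r * ln 2 - t)"
  have \<Psi>: "0 \<le> \<Psi>" "\<Psi> < 1" unfolding \<Psi>_def using \<rho>1 cY.Hf_nonneg by auto
  have \<Phi>: "0 \<le> \<Phi>" "\<Phi> < 1" unfolding \<Phi>_def using \<rho>2 cZ.Gf_nonneg by auto
  have \<kappa>: "0 \<le> \<kappa>" "\<kappa> < 1" unfolding \<kappa>_def t_def using r2 l2 unfolding IY_def[symmetric]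
    by (auto simp: field_simps)
  define B where "B = (\<lambda>n::nat. \<Psi> ^ n + \<kappa> ^ n + \<Phi> ^ n / \<rho>2)"
  have bound: "\<exists>cs. 0 \<le> code_error Q W (num_msgs r n) n (enc_of cs) (cY.decd (exp (real n * t)) n (num_msgs r n) cs)
      \<and> 0 \<le> code_covertness Q W x0 (num_msgs r n) n (enc_of cs)
      \<and> code_error Q W (num_msgs r n) n (enc_of cs) (cY.decd (exp (real n * t)) n (num_msgs r n) cs)
        + code_covertness Q W x0 (num_msgs r n) n (enc_of cs) \<le> B n" for n
  proof -
    define N where "N = num_msgs r n"
    define \<theta> where "\<theta> = exp (real n * t)"
    define CB where "CB = lenset (seqs n :: 'x list set) N"
    have N0: "0 < N" unfolding N_def by (rule num_msgs_pos)
    have th0: "0 < \<theta>" unfolding \<theta>_def by simp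
    have err_eq: "\<And>cs. code_error Q W N n (enc_of cs) (cY.decd \<theta> n N cs) = cY.errc \<theta> n N cs"
      unfolding code_error_eq cY.errc_def cY.Vn_def ..
    have PZ_eq: "\<And>cs. code_PZ Q W N n (enc_of cs) = cZ.Pc n N cs"
      by (intro ext) (simp add: code_PZ_eq cZ.Pc_def cZ.Vn_def)
    have Q0_eq: "(\<lambda>zs. \<Prod>i<n. innocent_dist Q W x0 (zs ! i)) = cZ.PYn n"
      by (intro ext) (simp add: cZ.PYn_def PYZ)
    have cov_eq: "\<And>cs. code_covertness Q W x0 N n (enc_of cs) = cZ.Dc n N cs"
      unfolding code_covertness_def cZ.Dc_def PZ_eq Q0_eq ..
    have pcb_eq: "cZ.pcb n N = cY.pcb n N"
      by (intro ext) (simp add: cY.pcb_def cZ.pcb_def cY.PXn_def cZ.PXn_def)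
    have E1: "(\<Sum>cs\<in>CB. cY.pcb n N cs * cY.errc \<theta> n N cs) \<le> \<Psi> ^ n + \<kappa> ^ n"
    proof -
      have "(\<Sum>cs\<in>CB. cY.pcb n N cs * cY.errc \<theta> n N cs) \<le>
          (\<Sum>a\<in>seqs n. \<Sum>y\<in>seqs n. cY.PXn n a * cY.Vn n a y * of_bool (cY.Vn n a y \<le> \<theta> * cY.PYn n y))
          + (real N - 1) / \<theta>"
        unfolding CB_def by (rule cY.err_expect[OF N0 th0])
      also have "(\<Sum>a\<in>seqs n. \<Sum>y\<in>seqs n. cY.PXn n a * cY.Vn n a y * of_bool (cY.Vn n a y \<le> \<theta> * cY.PYn n y))
          \<le> exp (\<rho>1 * (real n * t)) * cY.Hf \<rho>1 ^ n"
        unfolding \<theta>_def by (rule cY.chernoff_sum[OF \<rho>1(1)])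
      also have "exp (\<rho>1 * (real n * t)) * cY.Hf \<rho>1 ^ n = \<Psi> ^ n"
      proof -
        have "exp (\<rho>1 * (real n * t)) = exp (\<rho>1 * t) ^ n"
          by (simp add: exp_of_nat_mult[symmetric] algebra_simps)
        then show ?thesis unfolding \<Psi>_def by (simp add: power_mult_distrib)
      qed
      also have "(real N - 1) / \<theta> \<le> \<kappa> ^ n"
      proof -
        have "(real N - 1) / \<theta> \<le> 2 powr (real n * r) / \<theta>"
          using num_msgs_le[of r n] th0 unfolding N_def by (simp add: divide_right_mono)
        also have "2 powr (real n * r) = exp (real n * (r * ln 2))" by (simp add: powr_def algebra_simps)
        also have "exp (real n * (r * ln 2)) / \<theta> = exp (real n * (r * ln 2 - t))"
          unfolding \<theta>_def by (simp add: exp_diff[symmetric] algebra_simps)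
        also have "\<dots> = \<kappa> ^ n" unfolding \<kappa>_def by (rule exp_of_nat_mult)
        finally show ?thesis .
      qed
      finally show ?thesis by simp
    qed
    have E2: "(\<Sum>cs\<in>CB. cY.pcb n N cs * cZ.Dc n N cs) \<le> \<Phi> ^ n / \<rho>2"
    proof -
      have "(\<Sum>cs\<in>CB. cY.pcb n N cs * cZ.Dc n N cs) \<le> exp (- (\<rho>2 * ln (real N))) / \<rho>2 * cZ.Gf \<rho>2 ^ n"
        unfolding CB_def using cZ.D_expect[of \<rho>2 N n] \<rho>2 N0 by simp
      also have "\<dots> \<le> exp (- (\<rho>2 * (real n * (r * ln 2)))) / \<rho>2 * cZ.Gf \<rho>2 ^ n"
      proof -
        have "exp (real n * (r * ln 2)) = 2 powr (real n * r)" by (simp add: powr_def algebra_simps)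
        also have "\<dots> \<le> real N" unfolding N_def by (rule num_msgs_ge)
        finally have "exp (real n * (r * ln 2)) \<le> real N" .
        then have lnN: "real n * (r * ln 2) \<le> ln (real N)"
          using N0 by (subst ln_ge_iff) auto
        have "\<rho>2 * (real n * (r * ln 2)) \<le> \<rho>2 * ln (real N)"
          using lnN \<rho>2(1) by (rule mult_left_mono[OF _ less_imp_le])
        then have ex: "exp (- (\<rho>2 * ln (real N))) \<le> exp (- (\<rho>2 * (real n * (r * ln 2))))"
          by (simp only: exp_le_cancel_iff neg_le_iff_le)
        have g: "0 \<le> cZ.Gf \<rho>2 ^ n" using cZ.Gf_nonneg by (rule zero_le_power)
        have "exp (- (\<rho>2 * ln (real N))) / \<rho>2 \<le> exp (- (\<rho>2 * (real n * (r * ln 2)))) / \<rho>2"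
          using ex \<rho>2(1) by (rule divide_right_mono[OF _ less_imp_le])
        then show ?thesis using g by (rule mult_right_mono)
      qed
      also have "\<dots> = \<Phi> ^ n / \<rho>2"
      proof -
        have "exp (- (\<rho>2 * (real n * (r * ln 2)))) = exp (\<rho>2 * - (r * ln 2)) ^ n"
          by (simp add: exp_of_nat_mult[symmetric] algebra_simps)
        then show ?thesis unfolding \<Phi>_def by (simp add: power_mult_distrib)
      qed
      finally show ?thesis .
    qed
    have "(\<Sum>cs\<in>CB. cY.pcb n N cs * (cY.errc \<theta> n N cs + cZ.Dc n N cs)) \<le> B n"
      using E1 E2 unfolding B_def by (simp add: distrib_left sum.distrib)
    moreover obtain cs where "cs \<in> CB" "cY.errc \<theta> n N cs + cZ.Dc n N cs \<le>
        (\<Sum>cs\<in>CB. cY.pcb n N cs * (cY.errc \<theta> n N cs + cZ.Dc n N cs))"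
      using exists_le_expectation[of CB "cY.pcb n N" "\<lambda>cs. cY.errc \<theta> n N cs + cZ.Dc n N cs"]
        cY.finite_cb cY.pcb_nonneg cY.sum_pcb unfolding CB_def by blast
    moreover have "0 \<le> cY.errc \<theta> n N cs" unfolding cY.errc_def
      by (intro mult_nonneg_nonneg sum_nonneg) (auto simp: cY.Vn_nonneg)
    moreover have "0 \<le> cZ.Dc n N cs" by (rule cZ.Dc_nonneg[OF N0])
    ultimately show ?thesis unfolding N_def[symmetric] \<theta>_def[symmetric] err_eq cov_eq by auto
  qed
  then obtain csf where csf: "\<And>n. 0 \<le> code_error Q W (num_msgs r n) n (enc_of (csf n)) (cY.decd (exp (real n * t)) n (num_msgs r n) (csf n))
      \<and> 0 \<le> code_covertness Q W x0 (num_msgs r n) n (enc_of (csf n))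
      \<and> code_error Q W (num_msgs r n) n (enc_of (csf n)) (cY.decd (exp (real n * t)) n (num_msgs r n) (csf n))
        + code_covertness Q W x0 (num_msgs r n) n (enc_of (csf n)) \<le> B n"
    by metis
  have B0: "B \<longlonglongrightarrow> 0"
  proof -
    have a: "(\<lambda>n. \<Psi> ^ n) \<longlonglongrightarrow> 0" using \<Psi> by (intro LIMSEQ_power_zero) auto
    have b: "(\<lambda>n. \<kappa> ^ n) \<longlonglongrightarrow> 0" using \<kappa> by (intro LIMSEQ_power_zero) auto
    have c: "(\<lambda>n. \<Phi> ^ n / \<rho>2) \<longlonglongrightarrow> 0" using \<Phi>
      by (intro tendsto_divide_zero LIMSEQ_power_zero) auto
    show ?thesis unfolding B_def using tendsto_add[OF tendsto_add[OF a b] c] by simp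
  qed
  let ?enc = "\<lambda>n. enc_of (csf n) :: nat \<Rightarrow> nat \<Rightarrow> 's list \<Rightarrow> 'x"
  let ?dec = "\<lambda>n. cY.decd (exp (real n * t)) n (num_msgs r n) (csf n)"
  have e0: "0 \<le> code_error Q W (num_msgs r n) n (?enc n) (?dec n)"
    and e1: "code_error Q W (num_msgs r n) n (?enc n) (?dec n) \<le> B n"
    and c0: "0 \<le> code_covertness Q W x0 (num_msgs r n) n (?enc n)"
    and c1: "code_covertness Q W x0 (num_msgs r n) n (?enc n) \<le> B n" for n
    using csf[of n] by linarith+
  have "(\<lambda>n. code_error Q W (num_msgs r n) n (?enc n) (?dec n)) \<longlonglongrightarrow> 0"
    by (rule tendsto_sandwich[of "\<lambda>_. 0" _ _ B]) (auto intro!: always_eventually e0 e1 B0)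
  moreover have "(\<lambda>n. code_covertness Q W x0 (num_msgs r n) n (?enc n)) \<longlonglongrightarrow> 0"
    by (rule tendsto_sandwich[of "\<lambda>_. 0" _ _ B]) (auto intro!: always_eventually c0 c1 B0)
  ultimately show ?thesis unfolding covert_achievable_SCT_def
    by (intro exI[of _ ?enc] exI[of _ ?dec]) simp
qed


theorem theorem11:
  fixes Q :: "'s::finite \<Rightarrow> real"
    and W :: "'x::finite \<Rightarrow> 's \<Rightarrow> 'y::finite \<Rightarrow> 'z::finite \<Rightarrow> real"
    and x0 :: 'x
  assumes "is_pmf Q"
    and "\<And>x s. is_pmf (\<lambda>(y, z). W x s y z)"
    and "\<And>z. innocent_dist Q W x0 z > 0"
  shows "\<forall>R\<in>set_S Q W x0. ereal R \<le> covert_capacity_SCT Q W x0"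
proof
  fix R assume "R \<in> set_S Q W x0"
  then obtain PX where PX: "PX \<in> set_D Q W x0" and RI: "R \<le> mutual_info (joint_XY Q W PX)"
    unfolding set_S_def by blast
  have lt: "mutual_info (joint_XZ Q W PX) < mutual_info (joint_XY Q W PX)"
    using PX unfolding set_D_def by blast
  have "ereal (mutual_info (joint_XY Q W PX)) \<le> covert_capacity_SCT Q W x0"
    unfolding covert_capacity_SCT_def
  proof (rule dense_le_bounded[of "ereal (mutual_info (joint_XZ Q W PX))"])
    show "ereal (mutual_info (joint_XZ Q W PX)) < ereal (mutual_info (joint_XY Q W PX))"
      using lt by simp
    fix w assume w1: "ereal (mutual_info (joint_XZ Q W PX)) < w"
      and w2: "w < ereal (mutual_info (joint_XY Q W PX))"
    then obtain r where wr: "w = ereal r" by (cases w) auto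
    have "covert_achievable_SCT Q W x0 r"
      by (rule achievable[OF assms PX]) (use w1 w2 wr in auto)
    then show "w \<le> Sup (ereal ` {R. covert_achievable_SCT Q W x0 R})"
      unfolding wr by (intro Sup_upper) auto
  qed
  then show "ereal R \<le> covert_capacity_SCT Q W x0"
    using RI by (meson ereal_less_eq(3) order_trans)
qed


end
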